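(* Let $\Phi:\{1,\dots,B\}\to\mathcal{A}=\{1,\dots,A\}$, let $\Delta(\varepsilon)$ be a $B\times B$ stochastic matrix family normally parameterized by $\varepsilon\ge0$, and let $Z=\Phi(Y)$ with $Y$ the stationary Markov chain with transition matrix $\Delta(\varepsilon)$. Let $z_{-m}^0\in\mathcal{A}^{m+1}$, $\hat z_{-\hat m}^0\in\mathcal{A}^{\hat m+1}$, and Markov states $y_{-m-1},\hat y_{-\hat m-1}\in\{1,\dots,B\}$, let $n\le m,\hat m$ with $z_{-n}^0=\hat z_{-n}^0$, and let $k\ge0$ be such that $$\mathrm{ord}(p(z_{-n}^{-1}\mid z_{-m}^{-n-1})),\ \mathrm{ord}(p(\hat z_{-n}^{-1}\mid \hat z_{-\hat m}^{-n-1})),\ \mathrm{ord}(p(z_{-n}^{-1}\mid z_{-m}^{-n-1}y_{-m-1})),\ \mathrm{ord}(p(\hat z_{-n}^{-1}\mid \hat z_{-\hat m}^{-n-1}\hat y_{-\hat m-1}))\le k.$$ Then for all $j$ with $0\le j\le n-4k-1$, $$b_j(z_{-m}^0y_{-m-1})=b_j(\hat z_{-\hat m}^0\hat y_{-\hat m-1})=b_j(z_{-m}^0)=b_j(\hat z_{-\hat m}^0).$$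
   Context: For $a\in\mathcal{A}$, $\Delta_a$ is the matrix with $\Delta_a(i,j)=\Delta(i,j)$ if $\Phi(j)=a$ and $0$ otherwise. $\Delta(\varepsilon)$ is normally parameterized if (i) its entries are analytic at $\varepsilon=0$, (ii) for $\varepsilon>0$ it is non-negative and irreducible, (iii) each $\Delta_a(0)$ is zero or has rank one. $p(z_{-n}^{-1}\mid z_{-m}^{-n-1}y_{-m-1})$ means $P(Z_{-n}^{-1}=z_{-n}^{-1}\mid Z_{-m}^{-n-1}=z_{-m}^{-n-1},Y_{-m-1}=y_{-m-1})$, etc. $b_j(z_{-m}^0)$ is the coefficient of $\varepsilon^j$ in the Taylor expansion at $\varepsilon=0$ of $p(z_0\mid z_{-m}^{-1})$, and $b_j(z_{-m}^0y_{-m-1})$ is the coefficient of $\varepsilon^j$ in the Taylor expansion of $p(z_0\mid z_{-m}^{-1}y_{-m-1})=P(Z_0=z_0\mid Z_{-m}^{-1}=z_{-m}^{-1},Y_{-m-1}=y_{-m-1})$. For $f$ analytic at $0$, $\mathrm{ord}(f)$ is the degree of the first nonzero term of its Taylor series. *)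

theory Defs
  imports "HOL-Analysis.Analysis" "HOL-Library.Extended_Nat"
begin

text \<open>States of the Markov chain: a finite type 'b (standing for {1..B});
  alphabet: a finite type 'a (standing for {1..A}).
  Matrices are real^'b^'b, entry (i,j) is M $ i $ j.\<close>

fun mpow :: "real^'b^'b \<Rightarrow> nat \<Rightarrow> real^'b^'b" where
  "mpow M 0 = mat 1"
| "mpow M (Suc n) = M ** mpow M n"

definition nonneg_matrix :: "real^'b^'b \<Rightarrow> bool" where
  "nonneg_matrix M \<longleftrightarrow> (\<forall>i j. M $ i $ j \<ge> 0)"

definition stochastic_matrix :: "real^'b^'b \<Rightarrow> bool" where
  "stochastic_matrix M \<longleftrightarrow> nonneg_matrix M \<and> (\<forall>i. (\<Sum>j\<in>UNIV. M $ i $ j) = 1)"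

definition irreducible_matrix :: "real^'b^'b \<Rightarrow> bool" where
  "irreducible_matrix M \<longleftrightarrow> (\<forall>i j. \<exists>n. mpow M n $ i $ j > 0)"

text \<open>Real analyticity at 0 (on the right half-neighbourhood [0,r), which for power
  series is equivalent to a two-sided neighbourhood).\<close>
definition analytic_at0 :: "(real \<Rightarrow> real) \<Rightarrow> bool" where
  "analytic_at0 f \<longleftrightarrow> (\<exists>r>0. \<exists>c. \<forall>x. 0 \<le> x \<and> x < r \<longrightarrow> (\<lambda>n. c n * x ^ n) sums f x)"

definition Delta_sub :: "('b \<Rightarrow> 'a) \<Rightarrow> real^'b^'b \<Rightarrow> 'a \<Rightarrow> real^'b^'b" where
  "Delta_sub Phi M a = (\<chi> i j. if Phi j = a then M $ i $ j else 0)"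

definition normally_parameterized :: "('b \<Rightarrow> 'a) \<Rightarrow> (real \<Rightarrow> real^'b^'b) \<Rightarrow> bool" where
  "normally_parameterized Phi Delta \<longleftrightarrow>
     (\<forall>i j. analytic_at0 (\<lambda>e. Delta e $ i $ j)) \<and>
     (\<forall>e>0. nonneg_matrix (Delta e) \<and> irreducible_matrix (Delta e)) \<and>
     (\<forall>a. Delta_sub Phi (Delta 0) a = 0 \<or> rank (Delta_sub Phi (Delta 0) a) = 1)"

definition stationary_dist :: "real^'b^'b \<Rightarrow> real^'b \<Rightarrow> bool" where
  "stationary_dist M p \<longleftrightarrow> (\<forall>i. p $ i \<ge> 0) \<and> (\<Sum>i\<in>UNIV. p $ i) = 1 \<and>
     (\<forall>j. (\<Sum>i\<in>UNIV. p $ i * M $ i $ j) = p $ j)"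

fun path_weight :: "real^'b^'b \<Rightarrow> 'b \<Rightarrow> 'b list \<Rightarrow> real" where
  "path_weight M y [] = 1"
| "path_weight M y (x # xs) = M $ y $ x * path_weight M x xs"

text \<open>P(Y_{-l+1}^0 = ys) for the stationary chain (ys in time order).\<close>
definition prob_Y :: "real^'b \<Rightarrow> real^'b^'b \<Rightarrow> 'b list \<Rightarrow> real" where
  "prob_Y p M ys = (case ys of [] \<Rightarrow> 1 | y # rest \<Rightarrow> p $ y * path_weight M y rest)"

text \<open>P(Z_{-l+1}^0 = zs), Z = Phi(Y).\<close>
definition prob_Z :: "('b \<Rightarrow> 'a) \<Rightarrow> real^'b \<Rightarrow> real^'b^'b \<Rightarrow> 'a list \<Rightarrow> real" where
  "prob_Z Phi p M zs = (\<Sum>ys\<in>{ys. map Phi ys = zs}. prob_Y p M ys)"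

text \<open>P(Y_{-l} = y, Z_{-l+1}^0 = zs).\<close>
definition prob_YZ :: "('b \<Rightarrow> 'a) \<Rightarrow> real^'b \<Rightarrow> real^'b^'b \<Rightarrow> 'b \<Rightarrow> 'a list \<Rightarrow> real" where
  "prob_YZ Phi p M y zs = (\<Sum>ys\<in>{ys. map Phi ys = zs}. prob_Y p M (y # ys))"

definition taylor_coeffs :: "(real \<Rightarrow> real) \<Rightarrow> nat \<Rightarrow> real" where
  "taylor_coeffs f = (THE c. \<exists>r>0. \<forall>x. 0 < x \<and> x < r \<longrightarrow> (\<lambda>n. c n * x ^ n) sums f x)"

definition ord0 :: "(real \<Rightarrow> real) \<Rightarrow> enat" where
  "ord0 f = (if \<exists>n. taylor_coeffs f n \<noteq> 0
             then enat (LEAST n. taylor_coeffs f n \<noteq> 0) else \<infinity>)"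

end

theory Submission
  imports Defs
begin

definition exp0 :: "(real \<Rightarrow> real) \<Rightarrow> real fps \<Rightarrow> bool" where
  "exp0 f F \<longleftrightarrow> fps_conv_radius F > 0 \<and> eventually (\<lambda>x. eval_fps F x = f x) (at_right 0)"

lemma ev_rad:
  assumes "fps_conv_radius F > (0::ereal)"
  shows "eventually (\<lambda>x::real. ereal (norm x) < fps_conv_radius F) (at_right 0)"
proof -
  obtain r :: real where r0: "0 < ereal r" and r: "ereal r < fps_conv_radius F"
    using ereal_dense2[OF assms] by blast
  have r1: "0 < r" using r0 by simp
  have "\<forall>y>0. y < r \<longrightarrow> ereal (norm y) < fps_conv_radius F"
  proof (intro allI impI)
    fix y :: real assume "y > 0" "y < r"
    then have "ereal (norm y) < ereal r" by simp
    then show "ereal (norm y) < fps_conv_radius F" using r by (rule less_trans)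
  qed
  then show ?thesis unfolding eventually_at_right_field using r1 by (intro exI[of _ r]) simp
qed

lemma exp0_D: assumes "exp0 f F"
  shows "eventually (\<lambda>x. ereal (norm x) < fps_conv_radius F \<and> eval_fps F x = f x \<and> x > 0) (at_right 0)"
proof -
  have "fps_conv_radius F > 0" "eventually (\<lambda>x. eval_fps F x = f x) (at_right 0)"
    using assms unfolding exp0_def by auto
  from ev_rad[OF this(1)] this(2) eventually_at_right_less[of 0]
  show ?thesis by eventually_elim auto
qed

lemma rad_min: "0 < fps_conv_radius F \<Longrightarrow> 0 < fps_conv_radius G \<Longrightarrow> min (fps_conv_radius F) (fps_conv_radius G) \<le> R \<Longrightarrow> 0 < R"
proof -
  assume a: "0 < fps_conv_radius F" "0 < fps_conv_radius G" and b: "min (fps_conv_radius F) (fps_conv_radius G) \<le> R"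
  have "0 < min (fps_conv_radius F) (fps_conv_radius G)" using a by (simp add: min_def)
  then show "0 < R" using b by (rule order.strict_trans2)
qed

lemma exp0_cong: assumes "exp0 f F" "eventually (\<lambda>x. f x = g x) (at_right 0)" shows "exp0 g F"
proof -
  have "eventually (\<lambda>x. eval_fps F x = g x) (at_right 0)"
    using exp0_D[OF assms(1)] assms(2) by eventually_elim auto
  then show ?thesis using assms(1) unfolding exp0_def by auto
qed

lemma exp0_const: "exp0 (\<lambda>_. c) (fps_const c)"
  unfolding exp0_def by simp

lemma exp0_add: assumes "exp0 f F" "exp0 g G" shows "exp0 (\<lambda>x. f x + g x) (F + G)"
proof -
  have r: "fps_conv_radius (F+G) > 0" using assms fps_conv_radius_add[of F G]
    unfolding exp0_def by (auto intro: rad_min)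
  have "eventually (\<lambda>x. eval_fps (F+G) x = f x + g x) (at_right 0)"
    using exp0_D[OF assms(1)] exp0_D[OF assms(2)]
    by eventually_elim (auto simp: eval_fps_add)
  with r show ?thesis unfolding exp0_def by auto
qed

lemma exp0_diff: assumes "exp0 f F" "exp0 g G" shows "exp0 (\<lambda>x. f x - g x) (F - G)"
proof -
  have r: "fps_conv_radius (F-G) > 0" using assms fps_conv_radius_diff[of F G]
    unfolding exp0_def by (auto intro: rad_min)
  have "eventually (\<lambda>x. eval_fps (F-G) x = f x - g x) (at_right 0)"
    using exp0_D[OF assms(1)] exp0_D[OF assms(2)]
    by eventually_elim (auto simp: eval_fps_diff)
  with r show ?thesis unfolding exp0_def by auto
qed

lemma exp0_mult: assumes "exp0 f F" "exp0 g G" shows "exp0 (\<lambda>x. f x * g x) (F * G)"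
proof -
  have r: "fps_conv_radius (F*G) > 0" using assms fps_conv_radius_mult[of F G]
    unfolding exp0_def by (auto intro: rad_min)
  have "eventually (\<lambda>x. eval_fps (F*G) x = f x * g x) (at_right 0)"
    using exp0_D[OF assms(1)] exp0_D[OF assms(2)]
    by eventually_elim (auto simp: eval_fps_mult)
  with r show ?thesis unfolding exp0_def by auto
qed

lemma exp0_inverse: assumes "exp0 f F" "fps_nth F 0 \<noteq> 0"
  shows "exp0 (\<lambda>x. inverse (f x)) (inverse F)"
proof -
  have r: "fps_conv_radius (inverse F) > 0" using assms unfolding exp0_def
    by (intro fps_conv_radius_inverse_pos) auto
  have "eventually (\<lambda>x. eval_fps (inverse F) x = inverse (f x)) (at_right 0)"
    using exp0_D[OF assms(1)] ev_rad[OF r]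
  proof eventually_elim
    case (elim z)
    hence "eval_fps (inverse F * F) z = eval_fps (inverse F) z * f z"
      by (subst eval_fps_mult) auto
    also have "eval_fps (inverse F * F) z = 1"
      using assms by (simp add: inverse_mult_eq_1)
    finally show ?case by (auto simp: field_split_simps)
  qed
  with r show ?thesis unfolding exp0_def by auto
qed

lemma exp0_sum: assumes "\<And>i. i \<in> A \<Longrightarrow> exp0 (f i) (F i)"
  shows "exp0 (\<lambda>x. \<Sum>i\<in>A. f i x) (\<Sum>i\<in>A. F i)"
  using assms
proof (induction A rule: infinite_finite_induct)
  case (infinite A) then show ?case using exp0_const[of 0] by simp
next
  case empty then show ?case using exp0_const[of 0] by simp
next
  case (insert a A)
  then show ?case using exp0_add[of "f a" "F a" "\<lambda>x. \<Sum>i\<in>A. f i x" "\<Sum>i\<in>A. F i"] by simp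
qed

lemma exp0_prod: assumes "\<And>i. i \<in> A \<Longrightarrow> exp0 (f i) (F i)"
  shows "exp0 (\<lambda>x. \<Prod>i\<in>A. f i x) (\<Prod>i\<in>A. F i)"
  using assms
proof (induction A rule: infinite_finite_induct)
  case (infinite A) then show ?case using exp0_const[of 1] by simp
next
  case empty then show ?case using exp0_const[of 1] by simp
next
  case (insert a A)
  then show ?case using exp0_mult[of "f a" "F a" "\<lambda>x. \<Prod>i\<in>A. f i x" "\<Prod>i\<in>A. F i"] by simp
qed

lemma exp0_shift:
  assumes "exp0 f F" "\<forall>l<d. fps_nth F l = 0"
  shows "exp0 (\<lambda>x. f x / x ^ d) (fps_shift d F)" and "F = fps_X ^ d * fps_shift d F"
proof -
  show F: "F = fps_X ^ d * fps_shift d F"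
    using assms(2) by (intro fps_ext) (auto simp: fps_X_power_mult_nth)
  have r: "fps_conv_radius (fps_shift d F) > 0" using assms unfolding exp0_def by simp
  have "eventually (\<lambda>x. eval_fps (fps_shift d F) x = f x / x ^ d) (at_right 0)"
    using exp0_D[OF assms(1)]
  proof eventually_elim
    case (elim x)
    have "eval_fps F x = eval_fps (fps_X ^ d * fps_shift d F) x" using F by simp
    also have "\<dots> = x ^ d * eval_fps (fps_shift d F) x"
      using elim by (subst eval_fps_mult) auto
    finally show ?case using elim by (auto simp: field_simps)
  qed
  with r show "exp0 (\<lambda>x. f x / x ^ d) (fps_shift d F)" unfolding exp0_def by auto
qed

lemma exp0_tendsto: assumes "exp0 f F" shows "(f \<longlongrightarrow> fps_nth F 0) (at_right 0)"
proof -
  have r: "0 < fps_conv_radius F" and ev: "eventually (\<lambda>x. eval_fps F x = f x) (at_right 0)"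
    using assms unfolding exp0_def by auto
  have "norm (0::real) < fps_conv_radius F" using r by (simp add: zero_ereal_def)
  then have "continuous (at_right 0) (eval_fps F)" by (rule continuous_eval_fps)
  then have "((eval_fps F) \<longlongrightarrow> eval_fps F 0) (at_right 0)"
    by (simp add: continuous_within)
  then have "((eval_fps F) \<longlongrightarrow> fps_nth F 0) (at_right 0)" by (simp add: eval_fps_at_0)
  then show ?thesis using tendsto_cong[OF ev] by simp
qed

lemma exp0_lead:
  assumes "exp0 f F" "\<forall>l<d. fps_nth F l = 0"
  shows "((\<lambda>x. f x / x ^ d) \<longlongrightarrow> fps_nth F d) (at_right 0)"
  using exp0_tendsto[OF exp0_shift(1)[OF assms]] by simp

lemma exp0_zero: assumes "exp0 f F" "eventually (\<lambda>x. f x = 0) (at_right 0)" shows "F = 0"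
proof (rule ccontr)
  assume F: "F \<noteq> 0"
  define d where "d = subdegree F"
  have z: "\<forall>l<d. fps_nth F l = 0" unfolding d_def using nth_less_subdegree_zero by blast
  have t1: "((\<lambda>x. f x / x ^ d) \<longlongrightarrow> fps_nth F d) (at_right 0)"
    by (rule exp0_lead[OF assms(1) z])
  have ev: "eventually (\<lambda>x. f x / x ^ d = 0) (at_right 0)" using assms(2) by eventually_elim simp
  have t2: "((\<lambda>x. f x / x ^ d) \<longlongrightarrow> 0) (at_right 0)"
    using tendsto_cong[OF ev] by simp
  have "fps_nth F d = 0" using tendsto_unique[OF _ t1 t2] by simp
  with F show False unfolding d_def by simp
qed

lemma exp0_lead_nonneg:
  assumes "exp0 f F" "F \<noteq> 0" "eventually (\<lambda>x. f x \<ge> 0) (at_right 0)"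
  shows "fps_nth F (subdegree F) > 0"
proof -
  define d where "d = subdegree F"
  have z: "\<forall>l<d. fps_nth F l = 0" unfolding d_def using nth_less_subdegree_zero by blast
  have t1: "((\<lambda>x. f x / x ^ d) \<longlongrightarrow> fps_nth F d) (at_right 0)"
    by (rule exp0_lead[OF assms(1) z])
  have ev: "eventually (\<lambda>x. f x / x ^ d \<ge> 0) (at_right 0)"
    using assms(3) eventually_at_right_less[of 0] by eventually_elim simp
  have "fps_nth F d \<ge> 0" using tendsto_lowerbound[OF t1 ev] by simp
  moreover have "fps_nth F d \<noteq> 0" using assms(2) unfolding d_def by simp
  ultimately show ?thesis unfolding d_def by linarith
qed

lemma taylor_exists:
  assumes "exp0 f F"
  shows "\<exists>r>0. \<forall>x. 0 < x \<and> x < r \<longrightarrow> (\<lambda>n. fps_nth F n * x ^ n) sums f x"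
proof -
  have "eventually (\<lambda>x. ereal (norm x) < fps_conv_radius F \<and> eval_fps F x = f x \<and> x > 0) (at_right 0)"
    by (rule exp0_D[OF assms])
  then obtain b where b: "b > 0" "\<forall>y>0. y < b \<longrightarrow> ereal (norm y) < fps_conv_radius F \<and> eval_fps F y = f y \<and> y > 0"
    unfolding eventually_at_right_field by blast
  have "\<forall>x. 0 < x \<and> x < b \<longrightarrow> (\<lambda>n. fps_nth F n * x ^ n) sums f x"
  proof (intro allI impI)
    fix x :: real assume x: "0 < x \<and> x < b"
    then have "ereal (norm x) < fps_conv_radius F" "eval_fps F x = f x" using b by auto
    then show "(\<lambda>n. fps_nth F n * x ^ n) sums f x" using sums_eval_fps[of x F] by simp
  qed
  then show ?thesis using b(1) by blast
qed

lemma taylor_unique: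
  assumes "exp0 f F" "r > 0" "\<forall>x. 0 < x \<and> x < r \<longrightarrow> (\<lambda>n. c n * x ^ n) sums f x"
  shows "c = fps_nth F"
proof -
  define C where "C = Abs_fps c"
  have s: "summable (\<lambda>n. c n * (r/2) ^ n)" using assms(2,3) sums_summable[of _ "f (r/2)"] by auto
  have "conv_radius c \<ge> norm (r/2)" by (rule conv_radius_geI[OF s])
  then have rC: "fps_conv_radius C > 0" unfolding C_def fps_conv_radius_def using assms(2)
    by (auto intro: less_le_trans[rotated] simp: zero_ereal_def)
  have "eventually (\<lambda>x. eval_fps C x = f x) (at_right 0)"
    unfolding eventually_at_right_field
  proof (intro exI[of _ r] conjI allI impI)
    fix x :: real assume "0 < x" "x < r"
    then have "(\<lambda>n. c n * x ^ n) sums f x" using assms(3) by auto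
    then show "eval_fps C x = f x" unfolding eval_fps_def C_def by (simp add: sums_iff)
  qed (use assms(2) in auto)
  with rC have eC: "exp0 f C" unfolding exp0_def by auto
  have "exp0 (\<lambda>x. f x - f x) (F - C)" by (rule exp0_diff[OF assms(1) eC])
  then have "F - C = 0" by (rule exp0_zero) simp
  then show ?thesis unfolding C_def by (auto simp: fun_eq_iff)
qed

lemma taylor_coeffs_exp0:
  assumes "exp0 f F" shows "taylor_coeffs f = fps_nth F"
  unfolding taylor_coeffs_def
proof (rule the_equality)
  show "\<exists>r>0. \<forall>x. 0 < x \<and> x < r \<longrightarrow> (\<lambda>n. fps_nth F n * x ^ n) sums f x"
    by (rule taylor_exists[OF assms])
next
  fix c assume "\<exists>r>0. \<forall>x. 0 < x \<and> x < r \<longrightarrow> (\<lambda>n. c n * x ^ n) sums f x"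
  then show "c = fps_nth F" using taylor_unique[OF assms] by blast
qed

lemma ord0_exp0:
  assumes "exp0 f F"
  shows "ord0 f = (if F = 0 then \<infinity> else enat (subdegree F))"
  using assms fps_nonzero_nth[of F]
  by (auto simp: ord0_def taylor_coeffs_exp0 subdegree_def)

lemma taylor_coeffs_cong:
  assumes "\<And>x. x > 0 \<Longrightarrow> f x = g x" shows "taylor_coeffs f = taylor_coeffs g"
proof -
  have "\<And>c r. r > 0 \<Longrightarrow> (\<forall>x. 0 < x \<and> x < r \<longrightarrow> (\<lambda>n. c n * x ^ n) sums f x) \<longleftrightarrow>
           (\<forall>x. 0 < x \<and> x < r \<longrightarrow> (\<lambda>n. c n * x ^ n) sums g x)"
    using assms by auto
  then show ?thesis unfolding taylor_coeffs_def by (intro arg_cong[where f=The] ext) blast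
qed

lemma ord0_cong:
  assumes "\<And>x. x > 0 \<Longrightarrow> f x = g x" shows "ord0 f = ord0 g"
  unfolding ord0_def using taylor_coeffs_cong[OF assms] by simp

definition lz :: "nat \<Rightarrow> real fps \<Rightarrow> bool" where
  "lz N F \<longleftrightarrow> (\<exists>H. F = fps_X ^ N * H)"

lemma lz_iff: "lz N F \<longleftrightarrow> (\<forall>l<N. fps_nth F l = 0)"
proof
  assume "lz N F" then obtain H where "F = fps_X ^ N * H" unfolding lz_def by blast
  then show "\<forall>l<N. fps_nth F l = 0" by (simp add: fps_X_power_mult_nth)
next
  assume a: "\<forall>l<N. fps_nth F l = 0"
  have "F = fps_X ^ N * fps_shift N F" using a by (intro fps_ext) (auto simp: fps_X_power_mult_nth)
  then show "lz N F" unfolding lz_def by blast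
qed

lemma lz_0 [simp]: "lz 0 F" by (simp add: lz_iff)
lemma lz_zero [simp]: "lz N 0" by (simp add: lz_iff)

lemma lz_add: "lz N F \<Longrightarrow> lz N G \<Longrightarrow> lz N (F + G)" by (simp add: lz_iff)
lemma lz_diff: "lz N F \<Longrightarrow> lz N G \<Longrightarrow> lz N (F - G)" by (simp add: lz_iff)
lemma lz_uminus: "lz N F \<Longrightarrow> lz N (- F)" by (simp add: lz_iff)
lemma lz_mono: "lz N F \<Longrightarrow> M \<le> N \<Longrightarrow> lz M F" by (simp add: lz_iff)

lemma lz_mult: "lz a F \<Longrightarrow> lz b G \<Longrightarrow> lz (a + b) (F * G)"
proof -
  assume "lz a F" "lz b G"
  then obtain H K where "F = fps_X ^ a * H" "G = fps_X ^ b * K" unfolding lz_def by blast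
  then have "F * G = fps_X ^ (a + b) * (H * K)" by (simp add: power_add algebra_simps)
  then show ?thesis unfolding lz_def by blast
qed

lemma lz_multL: "lz a F \<Longrightarrow> lz a (G * F)"
  unfolding lz_def by (metis mult.left_commute)
lemma lz_multR: "lz a F \<Longrightarrow> lz a (F * G)"
  unfolding lz_def by (metis mult.assoc)

lemma lz_sum: "(\<And>i. i \<in> A \<Longrightarrow> lz N (F i)) \<Longrightarrow> lz N (\<Sum>i\<in>A. F i)"
proof (induction A rule: infinite_finite_induct)
  case (infinite A) then show ?case by simp
next
  case empty then show ?case by simp
next
  case (insert a A)
  have "lz N (F a)" "lz N (\<Sum>i\<in>A. F i)" using insert by auto
  then show ?case using insert(1,2) by (simp add: lz_add)
qed

lemma lz_cmult: "lz N (fps_const c * F) \<Longrightarrow> c \<noteq> 0 \<Longrightarrow> lz N F"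
  unfolding lz_iff by (simp add: fps_mult_left_const_nth)

lemma lz_subdeg: "lz (subdegree F) F"
  unfolding lz_iff using nth_less_subdegree_zero by blast

lemma lz_cancel:
  assumes "lz (a + subdegree G) (F * G)" "G \<noteq> 0"
  shows "lz a F"
proof -
  define d where "d = subdegree G"
  define G' where "G' = fps_shift d G"
  have G: "G = fps_X ^ d * G'" unfolding G'_def d_def
    using subdegree_decompose[of G] by (simp add: mult.commute)
  have G0: "fps_nth G' 0 \<noteq> 0" unfolding G'_def d_def using assms(2) by simp
  obtain H where H: "F * G = fps_X ^ (a + d) * H" using assms(1) unfolding lz_def d_def by blast
  have "fps_X ^ d * (F * G') = fps_X ^ d * (fps_X ^ a * H)"
    using H G by (simp add: power_add algebra_simps)
  then have "F * G' = fps_X ^ a * H" by simp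
  then have "F * G' * inverse G' = fps_X ^ a * (H * inverse G')" by (simp add: algebra_simps)
  moreover have "F * G' * inverse G' = F" using G0 by (simp add: mult.assoc inverse_mult_eq_1')
  ultimately show ?thesis unfolding lz_def by auto
qed

lemma exp0_X_power: "exp0 (\<lambda>x. x ^ n) (fps_X ^ n)"
  unfolding exp0_def by simp

lemma exp0_quot:
  assumes f: "exp0 f F" and g: "exp0 g G" and G: "G \<noteq> 0"
    and bd: "eventually (\<lambda>x. \<bar>f x\<bar> \<le> C * \<bar>g x\<bar>) (at_right 0)"
  shows "\<exists>B. exp0 (\<lambda>x. f x / g x) B \<and> B * G = F"
proof (cases "F = 0")
  case True
  have "eventually (\<lambda>x. f x = 0) (at_right 0)"
    using exp0_D[OF f] by eventually_elim (auto simp: True)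
  then have "eventually (\<lambda>x. 0 = f x / g x) (at_right 0)" by eventually_elim simp
  then have "exp0 (\<lambda>x. f x / g x) 0" using exp0_cong[OF exp0_const[of 0]] by simp
  then show ?thesis using True by (intro exI[of _ 0]) simp
next
  case False
  define dF where "dF = subdegree F"
  define dG where "dG = subdegree G"
  have zF: "\<forall>l<dF. fps_nth F l = 0" unfolding dF_def using nth_less_subdegree_zero by blast
  have zG: "\<forall>l<dG. fps_nth G l = 0" unfolding dG_def using nth_less_subdegree_zero by blast
  have le: "dG \<le> dF"
  proof (rule ccontr)
    assume "\<not> dG \<le> dF"
    then have lt: "dF < dG" by simp
    have t1: "((\<lambda>x. f x / x ^ dF) \<longlongrightarrow> fps_nth F dF) (at_right 0)"
      by (rule exp0_lead[OF f zF])
    have zG': "\<forall>l<dF. fps_nth G l = 0" using zG lt by auto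
    have t2: "((\<lambda>x. g x / x ^ dF) \<longlongrightarrow> fps_nth G dF) (at_right 0)"
      by (rule exp0_lead[OF g zG'])
    have G0: "fps_nth G dF = 0" using zG lt by auto
    have t1': "((\<lambda>x. \<bar>f x / x ^ dF\<bar>) \<longlongrightarrow> \<bar>fps_nth F dF\<bar>) (at_right 0)"
      by (rule tendsto_rabs[OF t1])
    have t2': "((\<lambda>x. C * \<bar>g x / x ^ dF\<bar>) \<longlongrightarrow> C * \<bar>fps_nth G dF\<bar>) (at_right 0)"
      by (intro tendsto_mult tendsto_const tendsto_rabs t2)
    have ev: "eventually (\<lambda>x. \<bar>f x / x ^ dF\<bar> \<le> C * \<bar>g x / x ^ dF\<bar>) (at_right 0)"
      using bd eventually_at_right_less[of 0]
    proof eventually_elim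
      case (elim x)
      then have "\<bar>f x\<bar> / x ^ dF \<le> C * \<bar>g x\<bar> / x ^ dF" by (intro divide_right_mono) auto
      moreover have "\<bar>x ^ dF\<bar> = x ^ dF" using elim by simp
      ultimately show ?case by (simp add: abs_divide)
    qed
    have "\<bar>fps_nth F dF\<bar> \<le> C * \<bar>fps_nth G dF\<bar>"
      using tendsto_le[OF _ t2' t1' ev] by simp
    then have "fps_nth F dF = 0" using G0 by simp
    then show False using False unfolding dF_def by simp
  qed
  define P where "P = fps_shift dF F"
  define Q where "Q = fps_shift dG G"
  have eP: "exp0 (\<lambda>x. f x / x ^ dF) P" unfolding P_def by (rule exp0_shift(1)[OF f zF])
  have eQ: "exp0 (\<lambda>x. g x / x ^ dG) Q" unfolding Q_def by (rule exp0_shift(1)[OF g zG])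
  have Q0: "fps_nth Q 0 \<noteq> 0" unfolding Q_def dG_def using G by simp
  have eQi: "exp0 (\<lambda>x. inverse (g x / x ^ dG)) (inverse Q)" by (rule exp0_inverse[OF eQ Q0])
  define B where "B = fps_X ^ (dF - dG) * P * inverse Q"
  have eB0: "exp0 (\<lambda>x. x ^ (dF - dG) * (f x / x ^ dF) * inverse (g x / x ^ dG)) B"
    unfolding B_def by (intro exp0_mult exp0_X_power eP eQi)
  have ev: "eventually (\<lambda>x. x ^ (dF - dG) * (f x / x ^ dF) * inverse (g x / x ^ dG) = f x / g x) (at_right 0)"
    using eventually_at_right_less[of 0]
  proof eventually_elim
    case (elim x)
    have xd: "x ^ dF = x ^ (dF - dG) * x ^ dG" using le by (simp flip: power_add)
    show ?case using elim by (simp add: xd field_simps)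
  qed
  have eB: "exp0 (\<lambda>x. f x / g x) B" by (rule exp0_cong[OF eB0 ev])
  have "B * G = fps_X ^ (dF - dG) * P * (inverse Q * Q) * fps_X ^ dG"
    unfolding B_def Q_def using subdegree_decompose[of G] unfolding dG_def
    by (metis mult.assoc)
  also have "\<dots> = fps_X ^ (dF - dG) * fps_X ^ dG * P" using Q0 inverse_mult_eq_1[OF Q0] by (simp add: algebra_simps)
  also have "\<dots> = fps_X ^ dF * P" using le by (simp flip: power_add)
  also have "\<dots> = F" unfolding P_def dF_def using subdegree_decompose[of F] by (simp add: mult.commute)
  finally show ?thesis using eB by blast
qed

lemma exp0_nonneg_lz:
  assumes e: "\<And>i. i \<in> I \<Longrightarrow> exp0 (x i) (X i)" and fin: "finite I"
    and nn: "\<And>i. i \<in> I \<Longrightarrow> eventually (\<lambda>e. x i e \<ge> 0) (at_right 0)"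
    and i: "i \<in> I"
  shows "lz (subdegree (\<Sum>j\<in>I. X j)) (X i)"
proof (rule ccontr)
  define S where "S = (\<Sum>j\<in>I. X j)"
  assume "\<not> lz (subdegree (\<Sum>j\<in>I. X j)) (X i)"
  then have nlz: "\<not> lz (subdegree S) (X i)" unfolding S_def .
  have Xi0: "X i \<noteq> 0" using nlz by auto
  define d where "d = subdegree (X i)"
  have "\<not> subdegree S \<le> d" using nlz lz_mono[OF lz_subdeg[of "X i"]] unfolding d_def by blast
  then have dlt: "d < subdegree S" by simp
  have zX: "\<forall>l<d. fps_nth (X i) l = 0" unfolding d_def using nth_less_subdegree_zero by blast
  have eS: "exp0 (\<lambda>e. \<Sum>j\<in>I. x j e) S" unfolding S_def by (rule exp0_sum[OF e])
  have zS: "\<forall>l<d. fps_nth S l = 0"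
  proof (intro allI impI)
    fix l assume "l < d" then have "l < subdegree S" using dlt by simp
    then show "fps_nth S l = 0" by (rule nth_less_subdegree_zero)
  qed
  have S0: "fps_nth S d = 0" using dlt by (rule nth_less_subdegree_zero)
  have t1: "((\<lambda>e. x i e / e ^ d) \<longlongrightarrow> fps_nth (X i) d) (at_right 0)"
    by (rule exp0_lead[OF e[OF i] zX])
  have t2: "((\<lambda>e. (\<Sum>j\<in>I. x j e) / e ^ d) \<longlongrightarrow> fps_nth S d) (at_right 0)"
    by (rule exp0_lead[OF eS zS])
  have evall: "eventually (\<lambda>e. \<forall>j\<in>I. x j e \<ge> 0) (at_right 0)"
    using eventually_ball_finite[OF fin, of "\<lambda>e j. x j e \<ge> 0" "at_right 0"] nn by blast
  have ev: "eventually (\<lambda>e. x i e / e ^ d \<le> (\<Sum>j\<in>I. x j e) / e ^ d) (at_right 0)"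
    using evall eventually_at_right_less[of 0]
  proof eventually_elim
    case (elim e)
    have "x i e \<le> (\<Sum>j\<in>I. x j e)" using elim fin i by (intro member_le_sum) auto
    then show ?case using elim by (intro divide_right_mono) auto
  qed
  have "fps_nth (X i) d \<le> 0" using tendsto_le[OF _ t2 t1 ev] S0 by simp
  moreover have "fps_nth (X i) d > 0" unfolding d_def
    by (rule exp0_lead_nonneg[OF e[OF i] Xi0 nn[OF i]])
  ultimately show False by simp
qed

definition stepF :: "('b::finite \<Rightarrow> 'b \<Rightarrow> real fps) \<Rightarrow> ('b \<Rightarrow> 'a) \<Rightarrow> ('b \<Rightarrow> real fps) \<Rightarrow> 'a \<Rightarrow> 'b \<Rightarrow> real fps" where
  "stepF E Phi X a j = (if Phi j = a then (\<Sum>i\<in>UNIV. X i * E i j) else 0)"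

fun fwdF :: "('b::finite \<Rightarrow> 'b \<Rightarrow> real fps) \<Rightarrow> ('b \<Rightarrow> 'a) \<Rightarrow> ('b \<Rightarrow> real fps) \<Rightarrow> 'a list \<Rightarrow> 'b \<Rightarrow> real fps" where
  "fwdF E Phi X [] = X"
| "fwdF E Phi X (a # as) = fwdF E Phi (stepF E Phi X a) as"

definition cross :: "('b \<Rightarrow> real fps) \<Rightarrow> ('b \<Rightarrow> real fps) \<Rightarrow> 'b \<Rightarrow> 'b \<Rightarrow> real fps" where
  "cross X Y i j = X i * Y j - X j * Y i"

lemma lz_double: "lz N (F + F) \<Longrightarrow> lz N F"
  unfolding lz_iff by simp

lemma cross_sum_sum:
  fixes X Y :: "'b::finite \<Rightarrow> real fps" and E :: "'b \<Rightarrow> 'b \<Rightarrow> real fps"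
  shows "((\<Sum>i\<in>UNIV. X i * E i j) * (\<Sum>i\<in>UNIV. Y i * E i l)
          - (\<Sum>i\<in>UNIV. X i * E i l) * (\<Sum>i\<in>UNIV. Y i * E i j))
        + ((\<Sum>i\<in>UNIV. X i * E i j) * (\<Sum>i\<in>UNIV. Y i * E i l)
          - (\<Sum>i\<in>UNIV. X i * E i l) * (\<Sum>i\<in>UNIV. Y i * E i j))
       = (\<Sum>i\<in>UNIV. \<Sum>i'\<in>UNIV. cross X Y i i' * (E i j * E i' l - E i l * E i' j))"
proof -
  define K where "K = (\<lambda>i i'. E i j * E i' l - E i l * E i' j)"
  define W where "W = (\<Sum>i\<in>UNIV. \<Sum>i'\<in>UNIV. X i * Y i' * K i i')"
  have "(\<Sum>i\<in>UNIV. X i * E i j) * (\<Sum>i\<in>UNIV. Y i * E i l)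
          - (\<Sum>i\<in>UNIV. X i * E i l) * (\<Sum>i\<in>UNIV. Y i * E i j)
      = (\<Sum>i\<in>UNIV. \<Sum>i'\<in>UNIV. X i * E i j * (Y i' * E i' l) - X i * E i l * (Y i' * E i' j))"
    by (simp only: sum_product sum_subtractf)
  also have "\<dots> = W" unfolding W_def
    by (intro sum.cong refl) (simp add: K_def algebra_simps)
  finally have W1: "(\<Sum>i\<in>UNIV. X i * E i j) * (\<Sum>i\<in>UNIV. Y i * E i l)
          - (\<Sum>i\<in>UNIV. X i * E i l) * (\<Sum>i\<in>UNIV. Y i * E i j) = W" .
  have W2: "(\<Sum>i\<in>UNIV. \<Sum>i'\<in>UNIV. X i' * Y i * K i i') = - W"
  proof -
    have "(\<Sum>i\<in>UNIV. \<Sum>i'\<in>UNIV. X i' * Y i * K i i') = (\<Sum>i'\<in>UNIV. \<Sum>i\<in>UNIV. X i' * Y i * K i i')"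
      by (rule sum.swap)
    also have "\<dots> = (\<Sum>i'\<in>UNIV. \<Sum>i\<in>UNIV. - (X i' * Y i * K i' i))"
      by (intro sum.cong refl) (simp add: K_def algebra_simps)
    also have "\<dots> = - W" unfolding W_def by (simp only: sum_negf)
    finally show ?thesis .
  qed
  have "(\<Sum>i\<in>UNIV. \<Sum>i'\<in>UNIV. cross X Y i i' * K i i')
      = (\<Sum>i\<in>UNIV. \<Sum>i'\<in>UNIV. X i * Y i' * K i i' - X i' * Y i * K i i')"
    unfolding cross_def by (intro sum.cong refl) (simp add: algebra_simps)
  also have "\<dots> = W - (\<Sum>i\<in>UNIV. \<Sum>i'\<in>UNIV. X i' * Y i * K i i')"
    unfolding W_def by (simp only: sum_subtractf)
  also have "\<dots> = W + W" using W2 by simp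
  finally show ?thesis using W1 unfolding K_def by simp
qed

lemma lz_step:
  fixes E :: "'b::finite \<Rightarrow> 'b \<Rightarrow> real fps"
  assumes minors: "\<And>a i i' j l. Phi j = a \<Longrightarrow> Phi l = a \<Longrightarrow> fps_nth (E i j * E i' l - E i l * E i' j) 0 = 0"
    and c: "\<And>i j. lz N (cross X Y i j)"
  shows "lz (N + 1) (cross (stepF E Phi X a) (stepF E Phi Y a) j l)"
proof (cases "Phi j = a \<and> Phi l = a")
  case False
  then have "stepF E Phi X a j = 0 \<and> stepF E Phi Y a j = 0 \<or> stepF E Phi X a l = 0 \<and> stepF E Phi Y a l = 0"
    unfolding stepF_def by auto
  then have "cross (stepF E Phi X a) (stepF E Phi Y a) j l = 0" unfolding cross_def by auto
  then show ?thesis by simp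
next
  case True
  define K where "K = (\<lambda>i i'. E i j * E i' l - E i l * E i' j)"
  have eq: "cross (stepF E Phi X a) (stepF E Phi Y a) j l + cross (stepF E Phi X a) (stepF E Phi Y a) j l
       = (\<Sum>i\<in>UNIV. \<Sum>i'\<in>UNIV. cross X Y i i' * K i i')"
  proof -
    have s1: "stepF E Phi X a j = (\<Sum>i\<in>UNIV. X i * E i j)" "stepF E Phi Y a l = (\<Sum>i\<in>UNIV. Y i * E i l)"
      "stepF E Phi X a l = (\<Sum>i\<in>UNIV. X i * E i l)" "stepF E Phi Y a j = (\<Sum>i\<in>UNIV. Y i * E i j)"
      using True unfolding stepF_def by simp_all
    show ?thesis unfolding cross_def[of "stepF E Phi X a"] s1 K_def by (rule cross_sum_sum)
  qed
  have K1: "lz 1 (K i i')" for i i'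
  proof -
    have "fps_nth (K i i') 0 = 0" unfolding K_def using minors[of j a l i i'] True by blast
    then show ?thesis unfolding lz_iff by simp
  qed
  have "lz (N + 1) (cross X Y i i' * K i i')" for i i' by (rule lz_mult[OF c K1])
  then have "lz (N + 1) (\<Sum>i\<in>UNIV. \<Sum>i'\<in>UNIV. cross X Y i i' * K i i')"
    by (intro lz_sum) blast
  then show ?thesis using eq by (intro lz_double[of _ "cross (stepF E Phi X a) (stepF E Phi Y a) j l"]) simp
qed

lemma lz_fwdF:
  fixes E :: "'b::finite \<Rightarrow> 'b \<Rightarrow> real fps"
  assumes minors: "\<And>a i i' j l. Phi j = a \<Longrightarrow> Phi l = a \<Longrightarrow> fps_nth (E i j * E i' l - E i l * E i' j) 0 = 0"
    and c: "\<And>i j. lz N (cross X Y i j)"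
  shows "lz (N + length as) (cross (fwdF E Phi X as) (fwdF E Phi Y as) j l)"
  using c
proof (induction as arbitrary: X Y N)
  case Nil then show ?case by simp
next
  case (Cons a as)
  have "\<And>i j. lz (N + 1) (cross (stepF E Phi X a) (stepF E Phi Y a) i j)"
    by (rule lz_step[OF minors Cons.prems])
  from Cons.IH[OF this] show ?case by simp
qed

lemma fwdF_append: "fwdF E Phi X (as @ bs) = fwdF E Phi (fwdF E Phi X as) bs"
  by (induction as arbitrary: X) auto

lemma sum_stepF:
  "(\<Sum>j\<in>UNIV. stepF E Phi X a j) = (\<Sum>i\<in>UNIV. X i * (\<Sum>j\<in>UNIV. if Phi j = a then E i j else 0))"
proof -
  have "(\<Sum>j\<in>UNIV. stepF E Phi X a j) = (\<Sum>j\<in>UNIV. \<Sum>i\<in>UNIV. if Phi j = a then X i * E i j else 0)"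
    unfolding stepF_def by (intro sum.cong refl) auto
  also have "\<dots> = (\<Sum>i\<in>UNIV. \<Sum>j\<in>UNIV. if Phi j = a then X i * E i j else 0)" by (rule sum.swap)
  also have "\<dots> = (\<Sum>i\<in>UNIV. X i * (\<Sum>j\<in>UNIV. if Phi j = a then E i j else 0))"
    by (intro sum.cong refl) (auto simp: sum_distrib_left intro!: sum.cong)
  finally show ?thesis .
qed

lemma cross_T:
  fixes X Y t :: "'b::finite \<Rightarrow> real fps"
  shows "(\<Sum>i\<in>UNIV. X i * t i) * (\<Sum>i\<in>UNIV. Y i) - (\<Sum>i\<in>UNIV. Y i * t i) * (\<Sum>i\<in>UNIV. X i)
       = (\<Sum>i\<in>UNIV. \<Sum>i'\<in>UNIV. t i * cross X Y i i')"
proof -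
  have "(\<Sum>i\<in>UNIV. X i * t i) * (\<Sum>i\<in>UNIV. Y i) - (\<Sum>i\<in>UNIV. Y i * t i) * (\<Sum>i\<in>UNIV. X i)
      = (\<Sum>i\<in>UNIV. \<Sum>i'\<in>UNIV. X i * t i * Y i' - Y i * t i * X i')"
    by (simp only: sum_product sum_subtractf)
  also have "\<dots> = (\<Sum>i\<in>UNIV. \<Sum>i'\<in>UNIV. t i * cross X Y i i')"
    unfolding cross_def by (intro sum.cong refl) (simp add: algebra_simps)
  finally show ?thesis .
qed

lemma main_fps:
  fixes E :: "'b::finite \<Rightarrow> 'b \<Rightarrow> real fps" and X Y :: "'b \<Rightarrow> real fps"
  assumes minors: "\<And>a i i' j l. Phi j = a \<Longrightarrow> Phi l = a \<Longrightarrow> fps_nth (E i j * E i' l - E i l * E i' j) 0 = 0"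
    and X0: "\<And>i. lz (subdegree (\<Sum>j\<in>UNIV. X j)) (X i)"
    and Y0: "\<And>i. lz (subdegree (\<Sum>j\<in>UNIV. Y j)) (Y i)"
    and nzX: "(\<Sum>j\<in>UNIV. fwdF E Phi X as j) \<noteq> 0"
    and nzY: "(\<Sum>j\<in>UNIV. fwdF E Phi Y as j) \<noteq> 0"
    and oX: "subdegree (\<Sum>j\<in>UNIV. fwdF E Phi X as j) \<le> subdegree (\<Sum>j\<in>UNIV. X j) + k"
    and oY: "subdegree (\<Sum>j\<in>UNIV. fwdF E Phi Y as j) \<le> subdegree (\<Sum>j\<in>UNIV. Y j) + k"
    and BX: "BX * (\<Sum>j\<in>UNIV. fwdF E Phi X as j) = (\<Sum>j\<in>UNIV. fwdF E Phi X (as @ [a0]) j)"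
    and BY: "BY * (\<Sum>j\<in>UNIV. fwdF E Phi Y as j) = (\<Sum>j\<in>UNIV. fwdF E Phi Y (as @ [a0]) j)"
    and jlt: "jj + 2 * k < length as"
  shows "fps_nth BX jj = fps_nth BY jj"
proof -
  define sX where "sX = subdegree (\<Sum>j\<in>UNIV. X j)"
  define sY where "sY = subdegree (\<Sum>j\<in>UNIV. Y j)"
  define Xn where "Xn = fwdF E Phi X as"
  define Yn where "Yn = fwdF E Phi Y as"
  define SX where "SX = (\<Sum>j\<in>UNIV. Xn j)"
  define SY where "SY = (\<Sum>j\<in>UNIV. Yn j)"
  define t where "t = (\<lambda>i. \<Sum>j\<in>UNIV. if Phi j = a0 then E i j else 0)"
  have c0: "lz (sX + sY) (cross X Y i j)" for i j
    unfolding cross_def sX_def sY_def by (intro lz_diff lz_mult X0 Y0)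
  have cn: "lz (sX + sY + length as) (cross Xn Yn i j)" for i j
    unfolding Xn_def Yn_def by (rule lz_fwdF[OF minors c0])
  have TX: "(\<Sum>j\<in>UNIV. fwdF E Phi X (as @ [a0]) j) = (\<Sum>i\<in>UNIV. Xn i * t i)"
    unfolding fwdF_append Xn_def t_def by (simp add: sum_stepF)
  have TY: "(\<Sum>j\<in>UNIV. fwdF E Phi Y (as @ [a0]) j) = (\<Sum>i\<in>UNIV. Yn i * t i)"
    unfolding fwdF_append Yn_def t_def by (simp add: sum_stepF)
  have "(BX - BY) * (SX * SY) = (\<Sum>i\<in>UNIV. Xn i * t i) * SY - (\<Sum>i\<in>UNIV. Yn i * t i) * SX"
  proof -
    have "(BX - BY) * (SX * SY) = (BX * SX) * SY - (BY * SY) * SX" by (simp add: algebra_simps)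
    also have "\<dots> = (\<Sum>i\<in>UNIV. Xn i * t i) * SY - (\<Sum>i\<in>UNIV. Yn i * t i) * SX"
      using BX BY TX TY unfolding SX_def SY_def Xn_def Yn_def by simp
    finally show ?thesis .
  qed
  also have "\<dots> = (\<Sum>i\<in>UNIV. \<Sum>i'\<in>UNIV. t i * cross Xn Yn i i')"
    unfolding SX_def SY_def by (rule cross_T)
  finally have eq: "(BX - BY) * (SX * SY) = (\<Sum>i\<in>UNIV. \<Sum>i'\<in>UNIV. t i * cross Xn Yn i i')" .
  have "lz (sX + sY + length as) ((BX - BY) * (SX * SY))"
    unfolding eq by (intro lz_sum lz_multL cn)
  moreover have SXY: "SX * SY \<noteq> 0" using nzX nzY unfolding SX_def SY_def Xn_def Yn_def by simp
  moreover have "subdegree (SX * SY) = subdegree SX + subdegree SY"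
    using nzX nzY unfolding SX_def SY_def Xn_def Yn_def by simp
  ultimately have "lz ((length as - 2 * k) + subdegree (SX * SY)) ((BX - BY) * (SX * SY))"
    using oX oY jlt unfolding SX_def SY_def Xn_def Yn_def sX_def sY_def
    by (elim lz_mono) simp
  then have "lz (length as - 2 * k) (BX - BY)" using SXY by (rule lz_cancel)
  then have "fps_nth (BX - BY) jj = 0" unfolding lz_iff using jlt by simp
  then show ?thesis by simp
qed

definition stepM :: "real^'b^'b \<Rightarrow> ('b::finite \<Rightarrow> 'a) \<Rightarrow> ('b \<Rightarrow> real) \<Rightarrow> 'a \<Rightarrow> 'b \<Rightarrow> real" where
  "stepM M Phi x a j = (if Phi j = a then (\<Sum>i\<in>UNIV. x i * M $ i $ j) else 0)"

fun fwd :: "real^'b^'b \<Rightarrow> ('b::finite \<Rightarrow> 'a) \<Rightarrow> ('b \<Rightarrow> real) \<Rightarrow> 'a list \<Rightarrow> 'b \<Rightarrow> real" where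
  "fwd M Phi x [] = x"
| "fwd M Phi x (a # as) = fwd M Phi (stepM M Phi x a) as"

lemma fwd_append: "fwd M Phi x (as @ bs) = fwd M Phi (fwd M Phi x as) bs"
  by (induction as arbitrary: x) auto

lemma fwd_nonneg:
  assumes "nonneg_matrix M" "\<And>i. x i \<ge> 0"
  shows "fwd M Phi x as j \<ge> 0"
  using assms(2)
proof (induction as arbitrary: x)
  case Nil then show ?case by simp
next
  case (Cons a as)
  have "stepM M Phi x a i \<ge> 0" for i
    using Cons.prems assms(1) unfolding stepM_def nonneg_matrix_def by (auto intro!: sum_nonneg)
  then show ?case using Cons.IH by simp
qed

lemma sum_stepM_le:
  assumes "stochastic_matrix M" "\<And>i. x i \<ge> 0"
  shows "(\<Sum>j\<in>UNIV. stepM M Phi x a j) \<le> (\<Sum>i\<in>UNIV. x i)"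
proof -
  have nn: "M $ i $ j \<ge> 0" for i j using assms(1) unfolding stochastic_matrix_def nonneg_matrix_def by auto
  have "(\<Sum>j\<in>UNIV. stepM M Phi x a j) \<le> (\<Sum>j\<in>UNIV. \<Sum>i\<in>UNIV. x i * M $ i $ j)"
    unfolding stepM_def using nn assms(2) by (intro sum_mono) (auto intro!: sum_nonneg)
  also have "\<dots> = (\<Sum>i\<in>UNIV. \<Sum>j\<in>UNIV. x i * M $ i $ j)" by (rule sum.swap)
  also have "\<dots> = (\<Sum>i\<in>UNIV. x i * (\<Sum>j\<in>UNIV. M $ i $ j))" by (simp add: sum_distrib_left)
  also have "\<dots> = (\<Sum>i\<in>UNIV. x i)" using assms(1) unfolding stochastic_matrix_def by simp
  finally show ?thesis .
qed

lemma sum_fwd_le: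
  assumes "stochastic_matrix M" "\<And>i. x i \<ge> 0"
  shows "(\<Sum>j\<in>UNIV. fwd M Phi x as j) \<le> (\<Sum>i\<in>UNIV. x i)"
  using assms(2)
proof (induction as arbitrary: x)
  case Nil then show ?case by simp
next
  case (Cons a as)
  have nnM: "nonneg_matrix M" using assms(1) unfolding stochastic_matrix_def by auto
  have nn: "stepM M Phi x a i \<ge> 0" for i
    using Cons.prems nnM unfolding stepM_def nonneg_matrix_def by (auto intro!: sum_nonneg)
  have "(\<Sum>j\<in>UNIV. fwd M Phi x (a # as) j) \<le> (\<Sum>j\<in>UNIV. stepM M Phi x a j)"
    using Cons.IH[OF nn] by simp
  also have "\<dots> \<le> (\<Sum>i\<in>UNIV. x i)" by (rule sum_stepM_le[OF assms(1) Cons.prems])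
  finally show ?case .
qed

lemma exp0_fwd:
  fixes Delta :: "real \<Rightarrow> real^'b::finite^'b"
  assumes eD: "\<And>i j. exp0 (\<lambda>e. Delta e $ i $ j) (E i j)"
    and eX: "\<And>i. exp0 (\<lambda>e. x e i) (X i)"
  shows "exp0 (\<lambda>e. fwd (Delta e) Phi (x e) as j) (fwdF E Phi X as j)"
  using eX
proof (induction as arbitrary: x X j)
  case Nil then show ?case by simp
next
  case (Cons a as)
  have "exp0 (\<lambda>e. stepM (Delta e) Phi (x e) a i) (stepF E Phi X a i)" for i
  proof (cases "Phi i = a")
    case True
    have "exp0 (\<lambda>e. \<Sum>l\<in>UNIV. x e l * Delta e $ l $ i) (\<Sum>l\<in>UNIV. X l * E l i)"
      by (intro exp0_sum exp0_mult Cons.prems eD)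
    then show ?thesis using True unfolding stepM_def stepF_def by simp
  next
    case False
    then show ?thesis unfolding stepM_def stepF_def using exp0_const[of 0] by simp
  qed
  from Cons.IH[OF this] show ?case by simp
qed

lemma ratio_fps:
  fixes Delta :: "real \<Rightarrow> real^'b::finite^'b"
  assumes eD: "\<And>i j. exp0 (\<lambda>e. Delta e $ i $ j) (E i j)"
    and st: "\<And>e. e > 0 \<Longrightarrow> stochastic_matrix (Delta e)"
    and eX: "\<And>i. exp0 (\<lambda>e. x e i) (X i)"
    and nn: "\<And>e i. e > 0 \<Longrightarrow> x e i \<ge> 0"
    and S0: "(\<Sum>j\<in>UNIV. fwdF E Phi X as j) \<noteq> 0"
  shows "\<exists>B. exp0 (\<lambda>e. (\<Sum>j\<in>UNIV. fwd (Delta e) Phi (x e) (as @ bs) j) / (\<Sum>j\<in>UNIV. fwd (Delta e) Phi (x e) as j)) B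
           \<and> B * (\<Sum>j\<in>UNIV. fwdF E Phi X as j) = (\<Sum>j\<in>UNIV. fwdF E Phi X (as @ bs) j)"
proof -
  have e1: "exp0 (\<lambda>e. \<Sum>j\<in>UNIV. fwd (Delta e) Phi (x e) (as @ bs) j) (\<Sum>j\<in>UNIV. fwdF E Phi X (as @ bs) j)"
    by (intro exp0_sum exp0_fwd eD eX)
  have e2: "exp0 (\<lambda>e. \<Sum>j\<in>UNIV. fwd (Delta e) Phi (x e) as j) (\<Sum>j\<in>UNIV. fwdF E Phi X as j)"
    by (intro exp0_sum exp0_fwd eD eX)
  have bd: "eventually (\<lambda>e. \<bar>\<Sum>j\<in>UNIV. fwd (Delta e) Phi (x e) (as @ bs) j\<bar> \<le> 1 * \<bar>\<Sum>j\<in>UNIV. fwd (Delta e) Phi (x e) as j\<bar>) (at_right 0)"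
    using eventually_at_right_less[of 0]
  proof eventually_elim
    case (elim e)
    have nM: "nonneg_matrix (Delta e)" using st[OF elim] unfolding stochastic_matrix_def by auto
    have nn2: "fwd (Delta e) Phi (x e) as i \<ge> 0" for i by (rule fwd_nonneg[OF nM nn[OF elim]])
    have nn3: "fwd (Delta e) Phi (x e) (as @ bs) i \<ge> 0" for i by (rule fwd_nonneg[OF nM nn[OF elim]])
    have "(\<Sum>j\<in>UNIV. fwd (Delta e) Phi (x e) (as @ bs) j) \<le> (\<Sum>j\<in>UNIV. fwd (Delta e) Phi (x e) as j)"
      unfolding fwd_append by (rule sum_fwd_le[OF st[OF elim] nn2])
    moreover have "0 \<le> (\<Sum>j\<in>UNIV. fwd (Delta e) Phi (x e) (as @ bs) j)" using nn3 by (simp add: sum_nonneg)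
    ultimately show ?case by simp
  qed
  show ?thesis by (rule exp0_quot[OF e1 e2 S0 bd])
qed

lemma main_fun:
  fixes Delta :: "real \<Rightarrow> real^'b::finite^'b" and Phi :: "'b \<Rightarrow> 'a"
  assumes eD: "\<And>i j. exp0 (\<lambda>e. Delta e $ i $ j) (E i j)"
    and minors: "\<And>a i i' j l. Phi j = a \<Longrightarrow> Phi l = a \<Longrightarrow> fps_nth (E i j * E i' l - E i l * E i' j) 0 = 0"
    and st: "\<And>e. e > 0 \<Longrightarrow> stochastic_matrix (Delta e)"
    and eX: "\<And>i. exp0 (\<lambda>e. x e i) (X i)"
    and nnx: "\<And>e i. e > 0 \<Longrightarrow> x e i \<ge> 0"
    and eY: "\<And>i. exp0 (\<lambda>e. y e i) (Y i)"
    and nny: "\<And>e i. e > 0 \<Longrightarrow> y e i \<ge> 0"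
    and ox: "ord0 (\<lambda>e. (\<Sum>j\<in>UNIV. fwd (Delta e) Phi (x e) as j) / (\<Sum>j\<in>UNIV. fwd (Delta e) Phi (x e) [] j)) \<le> enat k"
    and oy: "ord0 (\<lambda>e. (\<Sum>j\<in>UNIV. fwd (Delta e) Phi (y e) as j) / (\<Sum>j\<in>UNIV. fwd (Delta e) Phi (y e) [] j)) \<le> enat k"
    and jlt: "jj + 2 * k < length as"
  shows "taylor_coeffs (\<lambda>e. (\<Sum>j\<in>UNIV. fwd (Delta e) Phi (x e) (as @ [a0]) j) / (\<Sum>j\<in>UNIV. fwd (Delta e) Phi (x e) as j)) jj
       = taylor_coeffs (\<lambda>e. (\<Sum>j\<in>UNIV. fwd (Delta e) Phi (y e) (as @ [a0]) j) / (\<Sum>j\<in>UNIV. fwd (Delta e) Phi (y e) as j)) jj"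
proof -
  have step: "\<exists>B. exp0 (\<lambda>e. (\<Sum>j\<in>UNIV. fwd (Delta e) Phi (z e) (as @ [a0]) j) / (\<Sum>j\<in>UNIV. fwd (Delta e) Phi (z e) as j)) B
           \<and> B * (\<Sum>j\<in>UNIV. fwdF E Phi Z as j) = (\<Sum>j\<in>UNIV. fwdF E Phi Z (as @ [a0]) j)
           \<and> (\<Sum>j\<in>UNIV. fwdF E Phi Z as j) \<noteq> 0
           \<and> subdegree (\<Sum>j\<in>UNIV. fwdF E Phi Z as j) \<le> subdegree (\<Sum>j\<in>UNIV. Z j) + k
           \<and> (\<forall>i. lz (subdegree (\<Sum>j\<in>UNIV. Z j)) (Z i))"
    if eZ: "\<And>i. exp0 (\<lambda>e. z e i) (Z i)" and nnz: "\<And>e i. e > 0 \<Longrightarrow> z e i \<ge> 0"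
      and oz: "ord0 (\<lambda>e. (\<Sum>j\<in>UNIV. fwd (Delta e) Phi (z e) as j) / (\<Sum>j\<in>UNIV. fwd (Delta e) Phi (z e) [] j)) \<le> enat k"
    for z Z
  proof -
    have lz0: "\<forall>i. lz (subdegree (\<Sum>j\<in>UNIV. Z j)) (Z i)"
    proof
      fix i
      show "lz (subdegree (\<Sum>j\<in>UNIV. Z j)) (Z i)"
        by (rule exp0_nonneg_lz[of UNIV "\<lambda>i e. z e i" Z])
           (auto intro: eZ eventually_mono[OF eventually_at_right_less[of 0]] nnz)
    qed
    have e0: "exp0 (\<lambda>e. \<Sum>j\<in>UNIV. fwd (Delta e) Phi (z e) [] j) (\<Sum>j\<in>UNIV. fwdF E Phi Z [] j)"
      by (intro exp0_sum exp0_fwd eD eZ)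
    have S0: "(\<Sum>j\<in>UNIV. fwdF E Phi Z [] j) \<noteq> 0"
    proof
      assume z0: "(\<Sum>j\<in>UNIV. fwdF E Phi Z [] j) = 0"
      then have z: "sum Z UNIV = 0" by simp
      have "eventually (\<lambda>e. (\<Sum>j\<in>UNIV. fwd (Delta e) Phi (z e) [] j) = 0) (at_right 0)"
        using exp0_D[OF e0] by eventually_elim (auto simp: z)
      then have "eventually (\<lambda>e. 0 = (\<Sum>j\<in>UNIV. fwd (Delta e) Phi (z e) as j) / (\<Sum>j\<in>UNIV. fwd (Delta e) Phi (z e) [] j)) (at_right 0)"
        by eventually_elim simp
      note ev = this
      then have "exp0 (\<lambda>e. (\<Sum>j\<in>UNIV. fwd (Delta e) Phi (z e) as j) / (\<Sum>j\<in>UNIV. fwd (Delta e) Phi (z e) [] j)) 0"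
      proof -
        have c0: "exp0 (\<lambda>_. 0) (0::real fps)" using exp0_const[of 0] by simp
        show ?thesis by (rule exp0_cong[OF c0 ev])
      qed
      then show False using oz by (simp add: ord0_exp0)
    qed
    obtain Q where Q: "exp0 (\<lambda>e. (\<Sum>j\<in>UNIV. fwd (Delta e) Phi (z e) ([] @ as) j) / (\<Sum>j\<in>UNIV. fwd (Delta e) Phi (z e) [] j)) Q"
      "Q * (\<Sum>j\<in>UNIV. fwdF E Phi Z [] j) = (\<Sum>j\<in>UNIV. fwdF E Phi Z ([] @ as) j)"
      using ratio_fps[OF eD st eZ nnz S0, of as] by blast
    have "ord0 (\<lambda>e. (\<Sum>j\<in>UNIV. fwd (Delta e) Phi (z e) as j) / (\<Sum>j\<in>UNIV. fwd (Delta e) Phi (z e) [] j))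
        = (if Q = 0 then \<infinity> else enat (subdegree Q))" using ord0_exp0[OF Q(1)] by simp
    with oz have Q0: "Q \<noteq> 0" and Qk: "subdegree Q \<le> k" by (auto split: if_splits)
    have Sn: "(\<Sum>j\<in>UNIV. fwdF E Phi Z as j) = Q * (\<Sum>j\<in>UNIV. Z j)" using Q(2) by simp
    have Sn0: "(\<Sum>j\<in>UNIV. fwdF E Phi Z as j) \<noteq> 0" using Sn Q0 S0 by simp
    have sub: "subdegree (\<Sum>j\<in>UNIV. fwdF E Phi Z as j) \<le> subdegree (\<Sum>j\<in>UNIV. Z j) + k"
      using Sn Q0 S0 Qk by simp
    obtain B where "exp0 (\<lambda>e. (\<Sum>j\<in>UNIV. fwd (Delta e) Phi (z e) (as @ [a0]) j) / (\<Sum>j\<in>UNIV. fwd (Delta e) Phi (z e) as j)) B"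
      "B * (\<Sum>j\<in>UNIV. fwdF E Phi Z as j) = (\<Sum>j\<in>UNIV. fwdF E Phi Z (as @ [a0]) j)"
      using ratio_fps[OF eD st eZ nnz Sn0, of "[a0]"] by blast
    then show ?thesis using Sn0 sub lz0 by blast
  qed
  obtain BX where BX: "exp0 (\<lambda>e. (\<Sum>j\<in>UNIV. fwd (Delta e) Phi (x e) (as @ [a0]) j) / (\<Sum>j\<in>UNIV. fwd (Delta e) Phi (x e) as j)) BX"
           "BX * (\<Sum>j\<in>UNIV. fwdF E Phi X as j) = (\<Sum>j\<in>UNIV. fwdF E Phi X (as @ [a0]) j)"
           "(\<Sum>j\<in>UNIV. fwdF E Phi X as j) \<noteq> 0"
           "subdegree (\<Sum>j\<in>UNIV. fwdF E Phi X as j) \<le> subdegree (\<Sum>j\<in>UNIV. X j) + k"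
           "\<forall>i. lz (subdegree (\<Sum>j\<in>UNIV. X j)) (X i)"
    using step[OF eX nnx ox] by blast
  obtain BY where BY: "exp0 (\<lambda>e. (\<Sum>j\<in>UNIV. fwd (Delta e) Phi (y e) (as @ [a0]) j) / (\<Sum>j\<in>UNIV. fwd (Delta e) Phi (y e) as j)) BY"
           "BY * (\<Sum>j\<in>UNIV. fwdF E Phi Y as j) = (\<Sum>j\<in>UNIV. fwdF E Phi Y (as @ [a0]) j)"
           "(\<Sum>j\<in>UNIV. fwdF E Phi Y as j) \<noteq> 0"
           "subdegree (\<Sum>j\<in>UNIV. fwdF E Phi Y as j) \<le> subdegree (\<Sum>j\<in>UNIV. Y j) + k"
           "\<forall>i. lz (subdegree (\<Sum>j\<in>UNIV. Y j)) (Y i)"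
    using step[OF eY nny oy] by blast
  have "fps_nth BX jj = fps_nth BY jj"
    by (rule main_fps[OF minors _ _ BX(3) BY(3) BX(4) BY(4) BX(2) BY(2) jlt]) (use BX(5) BY(5) in auto)
  then show ?thesis using taylor_coeffs_exp0[OF BX(1)] taylor_coeffs_exp0[OF BY(1)] by simp
qed

lemma analytic_exp0:
  assumes "analytic_at0 f"
  shows "\<exists>F. exp0 f F \<and> fps_nth F 0 = f 0"
proof -
  obtain r c where r: "r > 0" and s: "\<forall>x. 0 \<le> x \<and> x < r \<longrightarrow> (\<lambda>n. c n * x ^ n) sums f x"
    using assms unfolding analytic_at0_def by blast
  define F where "F = Abs_fps c"
  have sm: "summable (\<lambda>n. c n * (r/2) ^ n)" using s r sums_summable[of _ "f (r/2)"] by auto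
  have "conv_radius c \<ge> norm (r/2)" by (rule conv_radius_geI[OF sm])
  then have rF: "fps_conv_radius F > 0" unfolding F_def fps_conv_radius_def using r
    by (auto intro: less_le_trans[rotated] simp: zero_ereal_def)
  have "eventually (\<lambda>x. eval_fps F x = f x) (at_right 0)"
    unfolding eventually_at_right_field
  proof (intro exI[of _ r] conjI allI impI)
    fix x :: real assume "0 < x" "x < r"
    then have "(\<lambda>n. c n * x ^ n) sums f x" using s by auto
    then show "eval_fps F x = f x" unfolding eval_fps_def F_def by (simp add: sums_iff)
  qed (use r in auto)
  with rF have "exp0 f F" unfolding exp0_def by auto
  moreover have "fps_nth F 0 = f 0"
  proof -
    have "(\<lambda>n. c n * 0 ^ n) sums f 0" using s r by auto
    moreover have "(\<lambda>n. c n * 0 ^ n) sums c 0" by (rule powser_sums_zero)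
    ultimately show ?thesis unfolding F_def using sums_unique2 by fastforce
  qed
  ultimately show ?thesis by blast
qed

lemma rank_le1_minor:
  fixes A :: "real^'n^'m"
  assumes "rank A \<le> 1"
  shows "A $ i $ j * A $ i' $ l = A $ i $ l * A $ i' $ j"
proof (rule ccontr)
  assume neq: "A $ i $ j * A $ i' $ l \<noteq> A $ i $ l * A $ i' $ j"
  have r2: "row i' A \<noteq> 0"
  proof
    assume "row i' A = 0"
    then have "A $ i' $ l = 0" "A $ i' $ j = 0" by (auto simp: row_def vec_eq_iff)
    then show False using neq by simp
  qed
  have r1: "row i A \<notin> span {row i' A}"
  proof
    assume "row i A \<in> span {row i' A}"
    then obtain c where c: "row i A = c *\<^sub>R row i' A" by (auto simp: span_singleton)
    then have "A $ i $ j = c * A $ i' $ j" "A $ i $ l = c * A $ i' $ l"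
      by (auto simp: row_def vec_eq_iff dest: spec[of _ j] spec[of _ l])
    then show False using neq by (simp add: algebra_simps)
  qed
  have ind: "independent {row i A, row i' A}"
    using r1 r2 independent_empty by (intro independent_insertI) (auto simp: span_empty)
  have ne: "row i A \<noteq> row i' A" using r1 span_base[of "row i' A" "{row i' A}"] by auto
  have sub: "{row i A, row i' A} \<subseteq> rows A" by (auto simp: rows_def)
  have "card {row i A, row i' A} \<le> dim (rows A)" by (rule independent_card_le_dim[OF sub ind])
  then have "2 \<le> rank A" using ne by (simp add: row_rank_def)
  then show False using assms by simp
qed

lemma finite_maplists: "finite {ys :: 'b::finite list. map Phi ys = zs}"
proof -
  have "{ys :: 'b list. map Phi ys = zs} \<subseteq> {ys. set ys \<subseteq> UNIV \<and> length ys = length zs}"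
    by auto
  moreover have "finite {ys :: 'b list. set ys \<subseteq> UNIV \<and> length ys = length zs}"
    by (rule finite_lists_length_eq) simp
  ultimately show ?thesis by (rule finite_subset)
qed

lemma sum_cons_lists:
  fixes Phi :: "'b::finite \<Rightarrow> 'a"
  shows "(\<Sum>ys\<in>{ys. map Phi ys = a # as}. g ys) = (\<Sum>j\<in>{j. Phi j = a}. \<Sum>ys\<in>{ys. map Phi ys = as}. g (j # ys))"
proof -
  have L: "{ys. map Phi ys = a # as} = (\<lambda>(j, ys). j # ys) ` ({j. Phi j = a} \<times> {ys. map Phi ys = as})"
    by (auto simp: map_eq_Cons_conv image_iff)
  have inj: "inj_on (\<lambda>(j, ys). j # ys) ({j. Phi j = a} \<times> {ys. map Phi ys = as})"
    by (auto simp: inj_on_def)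
  have "(\<Sum>ys\<in>{ys. map Phi ys = a # as}. g ys) = (\<Sum>(j, ys)\<in>{j. Phi j = a} \<times> {ys. map Phi ys = as}. g (j # ys))"
    unfolding L by (subst sum.reindex[OF inj]) (simp add: case_prod_unfold)
  also have "\<dots> = (\<Sum>j\<in>{j. Phi j = a}. \<Sum>ys\<in>{ys. map Phi ys = as}. g (j # ys))"
    by (rule sum.cartesian_product[symmetric])
  finally show ?thesis .
qed

lemma sum_paths_fwd:
  fixes Phi :: "'b::finite \<Rightarrow> 'a"
  shows "(\<Sum>ys\<in>{ys. map Phi ys = zs}. \<Sum>y\<in>UNIV. x y * path_weight M y ys) = (\<Sum>j\<in>UNIV. fwd M Phi x zs j)"
proof (induction zs arbitrary: x)
  case Nil
  have "{ys. map Phi ys = []} = {[]}" by auto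
  then show ?case by simp
next
  case (Cons a as)
  have "(\<Sum>ys\<in>{ys. map Phi ys = a # as}. \<Sum>y\<in>UNIV. x y * path_weight M y ys)
      = (\<Sum>j\<in>{j. Phi j = a}. \<Sum>ys\<in>{ys. map Phi ys = as}. \<Sum>y\<in>UNIV. x y * (M $ y $ j * path_weight M j ys))"
    by (simp add: sum_cons_lists)
  also have "\<dots> = (\<Sum>j\<in>{j. Phi j = a}. \<Sum>ys\<in>{ys. map Phi ys = as}. stepM M Phi x a j * path_weight M j ys)"
    unfolding stepM_def by (intro sum.cong refl) (simp add: sum_distrib_left sum_distrib_right mult_ac)
  also have "\<dots> = (\<Sum>j\<in>UNIV. \<Sum>ys\<in>{ys. map Phi ys = as}. stepM M Phi x a j * path_weight M j ys)"
  proof -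
    have "(\<Sum>j\<in>UNIV. \<Sum>ys\<in>{ys. map Phi ys = as}. stepM M Phi x a j * path_weight M j ys)
        = (\<Sum>j\<in>UNIV. if Phi j = a then (\<Sum>ys\<in>{ys. map Phi ys = as}. stepM M Phi x a j * path_weight M j ys) else 0)"
      by (intro sum.cong refl) (auto simp: stepM_def)
    also have "\<dots> = (\<Sum>j\<in>{j\<in>UNIV. Phi j = a}. \<Sum>ys\<in>{ys. map Phi ys = as}. stepM M Phi x a j * path_weight M j ys)"
      by (rule sum.inter_filter[symmetric]) simp
    finally show ?thesis by simp
  qed
  also have "\<dots> = (\<Sum>ys\<in>{ys. map Phi ys = as}. \<Sum>j\<in>UNIV. stepM M Phi x a j * path_weight M j ys)"
    by (rule sum.swap)
  also have "\<dots> = (\<Sum>j\<in>UNIV. fwd M Phi (stepM M Phi x a) as j)" by (rule Cons.IH)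
  finally show ?case by simp
qed

lemma prob_YZ_fwd:
  fixes Phi :: "'b::finite \<Rightarrow> 'a"
  shows "prob_YZ Phi p M y zs = (\<Sum>j\<in>UNIV. fwd M Phi (\<lambda>i. if i = y then p $ y else 0) zs j)"
proof -
  have "prob_YZ Phi p M y zs = (\<Sum>ys\<in>{ys. map Phi ys = zs}. \<Sum>i\<in>UNIV. (if i = y then p $ y else 0) * path_weight M i ys)"
    unfolding prob_YZ_def
  proof (rule sum.cong[OF refl])
    fix ys
    have "(\<Sum>i\<in>UNIV. (if i = y then p $ y else 0) * path_weight M i ys) = (\<Sum>i\<in>UNIV. if i = y then p $ y * path_weight M i ys else 0)"
      by (rule sum.cong) auto
    also have "\<dots> = p $ y * path_weight M y ys" by (simp add: sum.delta')
    finally show "prob_Y p M (y # ys) = (\<Sum>i\<in>UNIV. (if i = y then p $ y else 0) * path_weight M i ys)"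
      unfolding prob_Y_def by simp
  qed
  also have "\<dots> = (\<Sum>j\<in>UNIV. fwd M Phi (\<lambda>i. if i = y then p $ y else 0) zs j)" by (rule sum_paths_fwd)
  finally show ?thesis .
qed

lemma prob_Z_fwd:
  fixes Phi :: "'b::finite \<Rightarrow> 'a"
  assumes st: "stationary_dist M p"
  shows "prob_Z Phi p M zs = (\<Sum>j\<in>UNIV. fwd M Phi (\<lambda>i. p $ i) zs j)"
proof (cases zs)
  case Nil
  have "{ys. map Phi ys = []} = {[]}" by auto
  then show ?thesis using Nil st unfolding prob_Z_def prob_Y_def stationary_dist_def by simp
next
  case (Cons a as)
  define q where "q = (\<lambda>i. if Phi i = a then p $ i else 0)"
  have sq: "stepM M Phi (\<lambda>i. p $ i) a = q"
    using st unfolding stepM_def q_def stationary_dist_def by (auto simp: fun_eq_iff)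
  have "prob_Z Phi p M zs = (\<Sum>j\<in>{j. Phi j = a}. \<Sum>ys\<in>{ys. map Phi ys = as}. p $ j * path_weight M j ys)"
    unfolding prob_Z_def Cons by (simp add: sum_cons_lists prob_Y_def)
  also have "\<dots> = (\<Sum>ys\<in>{ys. map Phi ys = as}. \<Sum>j\<in>{j. Phi j = a}. p $ j * path_weight M j ys)"
    by (rule sum.swap)
  also have "\<dots> = (\<Sum>ys\<in>{ys. map Phi ys = as}. \<Sum>j\<in>UNIV. q j * path_weight M j ys)"
  proof (rule sum.cong[OF refl])
    fix ys
    have "(\<Sum>j\<in>UNIV. q j * path_weight M j ys) = (\<Sum>j\<in>UNIV. if Phi j = a then p $ j * path_weight M j ys else 0)"
      unfolding q_def by (intro sum.cong refl) auto
    also have "\<dots> = (\<Sum>j\<in>{j\<in>UNIV. Phi j = a}. p $ j * path_weight M j ys)"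
      by (rule sum.inter_filter[symmetric]) simp
    finally show "(\<Sum>j\<in>{j. Phi j = a}. p $ j * path_weight M j ys) = (\<Sum>j\<in>UNIV. q j * path_weight M j ys)" by simp
  qed
  also have "\<dots> = (\<Sum>j\<in>UNIV. fwd M Phi q as j)" by (rule sum_paths_fwd)
  also have "\<dots> = (\<Sum>j\<in>UNIV. fwd M Phi (\<lambda>i. p $ i) zs j)" using sq Cons by simp
  finally show ?thesis .
qed

lemma mpow_nonneg: "nonneg_matrix M \<Longrightarrow> mpow M n $ i $ j \<ge> 0"
proof (induction n arbitrary: i j)
  case 0 then show ?case by (simp add: mat_def)
next
  case (Suc n)
  then show ?case using Suc.prems unfolding nonneg_matrix_def
    by (simp add: matrix_matrix_mult_def sum_nonneg)
qed

lemma inv_mpow: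
  fixes y :: "'b::finite \<Rightarrow> real"
  assumes inv: "\<And>j. (\<Sum>i\<in>UNIV. y i * M $ i $ j) = y j"
  shows "(\<Sum>i\<in>UNIV. y i * mpow M n $ i $ j) = y j"
proof (induction n arbitrary: j)
  case 0
  have "(\<Sum>i\<in>UNIV. y i * mpow M 0 $ i $ j) = (\<Sum>i\<in>UNIV. if i = j then y i else 0)"
    by (intro sum.cong refl) (simp add: mat_def)
  then show ?case by simp
next
  case (Suc n)
  have "(\<Sum>i\<in>UNIV. y i * mpow M (Suc n) $ i $ j) = (\<Sum>i\<in>UNIV. \<Sum>k\<in>UNIV. y i * M $ i $ k * mpow M n $ k $ j)"
    by (simp add: matrix_matrix_mult_def sum_distrib_left mult.assoc)
  also have "\<dots> = (\<Sum>k\<in>UNIV. \<Sum>i\<in>UNIV. y i * M $ i $ k * mpow M n $ k $ j)" by (rule sum.swap)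
  also have "\<dots> = (\<Sum>k\<in>UNIV. y k * mpow M n $ k $ j)"
    by (intro sum.cong refl) (simp add: sum_distrib_right[symmetric] inv)
  also have "\<dots> = y j" by (rule Suc.IH)
  finally show ?case .
qed

lemma inv_zero:
  fixes y :: "'b::finite \<Rightarrow> real"
  assumes irr: "irreducible_matrix M" and nnM: "nonneg_matrix M"
    and inv: "\<And>j. (\<Sum>i\<in>UNIV. y i * M $ i $ j) = y j"
    and nn: "\<And>i. y i \<ge> 0" and z: "y j = 0"
  shows "y i = 0"
proof -
  obtain n where n: "mpow M n $ i $ j > 0" using irr unfolding irreducible_matrix_def by blast
  have "(\<Sum>l\<in>UNIV. y l * mpow M n $ l $ j) = 0" using inv_mpow[OF inv, of n j] z by simp
  moreover have "\<forall>l\<in>UNIV. y l * mpow M n $ l $ j \<ge> 0" using nn mpow_nonneg[OF nnM] by simp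
  ultimately have "\<forall>l\<in>UNIV. y l * mpow M n $ l $ j = 0"
    using sum_nonneg_eq_0_iff[of UNIV "\<lambda>l. y l * mpow M n $ l $ j"] by simp
  then have "y i * mpow M n $ i $ j = 0" by simp
  then show ?thesis using n by simp
qed

lemma inv_unique:
  fixes x :: "'b::finite \<Rightarrow> real"
  assumes irr: "irreducible_matrix M" and nnM: "nonneg_matrix M"
    and st: "stationary_dist M p"
    and inv: "\<And>j. (\<Sum>i\<in>UNIV. x i * M $ i $ j) = x j"
    and s0: "(\<Sum>i\<in>UNIV. x i) = 0"
  shows "x i = 0"
proof -
  have pinv: "\<And>j. (\<Sum>i\<in>UNIV. p $ i * M $ i $ j) = p $ j" and pnn: "\<And>i. p $ i \<ge> 0"
    and ps: "(\<Sum>i\<in>UNIV. p $ i) = 1" using st unfolding stationary_dist_def by auto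
  have ppos: "p $ j > 0" for j
  proof (rule ccontr)
    assume "\<not> p $ j > 0" then have "p $ j = 0" using pnn[of j] by simp
    then have "\<forall>i. p $ i = 0" using inv_zero[OF irr nnM pinv pnn] by blast
    then show False using ps by simp
  qed
  define c where "c = Max ((\<lambda>i. x i / p $ i) ` UNIV)"
  have "c \<in> (\<lambda>i. x i / p $ i) ` UNIV" unfolding c_def by (rule Max_in) auto
  then obtain i0 where i0: "c = x i0 / p $ i0" by auto
  define y where "y = (\<lambda>i. c * p $ i - x i)"
  have yinv: "(\<Sum>i\<in>UNIV. y i * M $ i $ j) = y j" for j
  proof -
    have "(\<Sum>i\<in>UNIV. y i * M $ i $ j) = c * (\<Sum>i\<in>UNIV. p $ i * M $ i $ j) - (\<Sum>i\<in>UNIV. x i * M $ i $ j)"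
      unfolding y_def by (simp add: algebra_simps sum_subtractf sum_distrib_left)
    then show ?thesis using pinv inv unfolding y_def by simp
  qed
  have ynn: "y i \<ge> 0" for i
  proof -
    have "x i / p $ i \<le> c" unfolding c_def by (rule Max_ge) auto
    then show ?thesis unfolding y_def using ppos[of i] by (simp add: field_simps)
  qed
  have y0: "y i0 = 0" unfolding y_def i0 using ppos[of i0] by simp
  have yz: "y l = 0" for l by (rule inv_zero[OF irr nnM yinv ynn y0])
  then have xl: "x l = c * p $ l" for l unfolding y_def by (simp add: algebra_simps)
  then have "0 = c" using s0 ps by (simp add: sum_distrib_left[symmetric])
  then show ?thesis using xl by simp
qed

lemma delta_sum: "(\<Sum>j\<in>(UNIV::'b::finite set). (if i = j then (1::real) else 0) * f j) = f i"
proof -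
  have "(\<Sum>j\<in>(UNIV::'b set). (if i = j then (1::real) else 0) * f j) = (\<Sum>j\<in>UNIV. if i = j then f j else 0)"
    by (rule sum.cong) auto
  then show ?thesis by simp
qed

definition Amat :: "real^'b^'b \<Rightarrow> 'b \<Rightarrow> real^'b^'b" where
  "Amat M i0 = (\<chi> i j. if i = i0 then 1 else (if i = j then 1 else 0) - M $ j $ i)"

lemma Amat_p:
  assumes st: "stationary_dist M p"
  shows "Amat M i0 *v p = (\<chi> i. if i = i0 then 1 else 0)"
proof -
  have pinv: "\<And>j. (\<Sum>i\<in>UNIV. p $ i * M $ i $ j) = p $ j" and ps: "(\<Sum>i\<in>UNIV. p $ i) = 1"
    using st unfolding stationary_dist_def by auto
  show ?thesis
    unfolding vec_eq_iff
  proof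
    fix i
    show "(Amat M i0 *v p) $ i = (\<chi> i. if i = i0 then 1 else 0) $ i"
    proof (cases "i = i0")
      case True then show ?thesis using ps by (simp add: Amat_def matrix_vector_mult_def)
    next
      case False
      have "(Amat M i0 *v p) $ i = (\<Sum>j\<in>UNIV. (if i = j then 1 else 0) * p $ j - M $ j $ i * p $ j)"
        using False by (simp add: Amat_def matrix_vector_mult_def algebra_simps)
      also have "\<dots> = p $ i - (\<Sum>j\<in>UNIV. p $ j * M $ j $ i)"
        by (simp only: sum_subtractf delta_sum) (simp add: mult.commute)
      also have "\<dots> = 0" using pinv by simp
      finally show ?thesis using False by simp
    qed
  qed
qed

lemma Amat_det:
  assumes stoch: "stochastic_matrix M" and irr: "irreducible_matrix M" and st: "stationary_dist M p"
  shows "det (Amat M i0) \<noteq> 0"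
proof -
  have nnM: "nonneg_matrix M" using stoch unfolding stochastic_matrix_def by auto
  have rs: "\<And>i. (\<Sum>j\<in>UNIV. M $ i $ j) = 1" using stoch unfolding stochastic_matrix_def by auto
  have "\<forall>x. Amat M i0 *v x = 0 \<longrightarrow> x = 0"
  proof (intro allI impI)
    fix x :: "real^'a" assume ax: "Amat M i0 *v x = 0"
    have comp: "(Amat M i0 *v x) $ i = 0" for i using ax by simp
    have s0: "(\<Sum>j\<in>UNIV. x $ j) = 0" using comp[of i0] by (simp add: Amat_def matrix_vector_mult_def)
    define r where "r = (\<lambda>i. x $ i - (\<Sum>j\<in>UNIV. x $ j * M $ j $ i))"
    have rne: "r i = 0" if "i \<noteq> i0" for i
    proof -
      have "0 = (\<Sum>j\<in>UNIV. (if i = j then 1 else 0) * x $ j - M $ j $ i * x $ j)"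
        using comp[of i] that by (simp add: Amat_def matrix_vector_mult_def algebra_simps)
      also have "\<dots> = r i" unfolding r_def
        by (simp only: sum_subtractf delta_sum) (simp add: mult.commute)
      finally show ?thesis by simp
    qed
    have "(\<Sum>i\<in>UNIV. r i) = (\<Sum>i\<in>UNIV. x $ i) - (\<Sum>j\<in>UNIV. x $ j * (\<Sum>i\<in>UNIV. M $ j $ i))"
    proof -
      have "(\<Sum>i\<in>UNIV. r i) = (\<Sum>i\<in>UNIV. x $ i) - (\<Sum>i\<in>UNIV. \<Sum>j\<in>UNIV. x $ j * M $ j $ i)"
        unfolding r_def by (simp only: sum_subtractf)
      also have "(\<Sum>i\<in>UNIV. \<Sum>j\<in>UNIV. x $ j * M $ j $ i) = (\<Sum>j\<in>UNIV. \<Sum>i\<in>UNIV. x $ j * M $ j $ i)"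
        by (rule sum.swap)
      also have "\<dots> = (\<Sum>j\<in>UNIV. x $ j * (\<Sum>i\<in>UNIV. M $ j $ i))" by (simp only: sum_distrib_left)
      finally show ?thesis .
    qed
    also have "\<dots> = 0" using rs s0 by simp
    finally have sr: "(\<Sum>i\<in>UNIV. r i) = 0" .
    have "(\<Sum>i\<in>UNIV. r i) = r i0 + (\<Sum>i\<in>UNIV - {i0}. r i)" by (simp add: sum.remove)
    also have "(\<Sum>i\<in>UNIV - {i0}. r i) = 0" using rne by (intro sum.neutral) auto
    finally have "r i0 = 0" using sr by simp
    then have rz: "r i = 0" for i using rne by (cases "i = i0") auto
    have inv: "(\<Sum>j\<in>UNIV. x $ j * M $ j $ i) = x $ i" for i using rz[of i] unfolding r_def by simp
    have "x $ i = 0" for i by (rule inv_unique[OF irr nnM st, of "\<lambda>i. x $ i"]) (use inv s0 in auto)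
    then show "x = 0" by (simp add: vec_eq_iff)
  qed
  then have "invertible (Amat M i0)"
    unfolding invertible_left_inverse matrix_left_invertible_ker by blast
  then show ?thesis by (simp add: invertible_det_nz)
qed

lemma stationary_cramer:
  assumes stoch: "stochastic_matrix M" and irr: "irreducible_matrix M" and st: "stationary_dist M p"
  shows "p $ k = det (\<chi> i j. if j = k then (\<chi> i. if i = i0 then (1::real) else 0) $ i else Amat M i0 $ i $ j) / det (Amat M i0)"
proof -
  have d: "det (Amat M i0) \<noteq> 0" by (rule Amat_det[OF stoch irr st])
  have "Amat M i0 *v p = (\<chi> i. if i = i0 then 1 else 0)" by (rule Amat_p[OF st])
  then have "p = (\<chi> k. det (\<chi> i j. if j = k then (\<chi> i. if i = i0 then (1::real) else 0) $ i else Amat M i0 $ i $ j) / det (Amat M i0))"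
    using cramer[OF d] by blast
  then have "p $ k = (\<chi> k. det (\<chi> i j. if j = k then (\<chi> i. if i = i0 then (1::real) else 0) $ i else Amat M i0 $ i $ j) / det (Amat M i0)) $ k"
    by (rule arg_cong)
  then show ?thesis by (simp only: vec_lambda_beta)
qed

lemma exp0_det:
  fixes A :: "real \<Rightarrow> real^'b::finite^'b"
  assumes "\<And>i j. exp0 (\<lambda>e. A e $ i $ j) (AF i j)"
  shows "\<exists>F. exp0 (\<lambda>e. det (A e)) F"
proof -
  have "exp0 (\<lambda>e. \<Sum>p\<in>{p. p permutes (UNIV::'b set)}. of_int (sign p) * (\<Prod>i\<in>UNIV. A e $ i $ p i))
     (\<Sum>p\<in>{p. p permutes (UNIV::'b set)}. fps_const (of_int (sign p)) * (\<Prod>i\<in>UNIV. AF i (p i)))"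
    by (intro exp0_sum exp0_mult exp0_const exp0_prod assms)
  then show ?thesis unfolding det_def by blast
qed

lemma exp0_ev_nonzero:
  assumes "exp0 f F" "\<And>e. e > 0 \<Longrightarrow> f e \<noteq> 0" shows "F \<noteq> 0"
proof
  assume F: "F = 0"
  have "eventually (\<lambda>e. False) (at_right (0::real))"
    using exp0_D[OF assms(1)] by eventually_elim (use assms(2) F in auto)
  then show False by simp
qed

lemma pi_exp0:
  fixes Delta :: "real \<Rightarrow> real^'b::finite^'b" and pi :: "real \<Rightarrow> real^'b"
  assumes stoch: "\<And>e. e > 0 \<Longrightarrow> stochastic_matrix (Delta e)"
    and eD: "\<And>i j. exp0 (\<lambda>e. Delta e $ i $ j) (E i j)"
    and irr: "\<And>e. e > 0 \<Longrightarrow> irreducible_matrix (Delta e)"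
    and stat: "\<And>e. e > 0 \<Longrightarrow> stationary_dist (Delta e) (pi e)"
  shows "\<exists>P. exp0 (\<lambda>e. pi e $ k) P"
proof -
  define b :: "real^'b" where "b = (\<chi> i. if i = k then 1 else 0)"
  define N where "N = (\<lambda>e. det (\<chi> i j. if j = k then b $ i else Amat (Delta e) k $ i $ j))"
  define D where "D = (\<lambda>e. det (Amat (Delta e) k))"
  have eA: "exp0 (\<lambda>e. Amat (Delta e) k $ i $ j) (if i = k then 1 else (if i = j then 1 else 0) - E j i)" for i j
  proof (cases "i = k")
    case True then show ?thesis unfolding Amat_def using exp0_const[of 1] by simp
  next
    case False
    have "exp0 (\<lambda>e. (if i = j then 1 else 0) - Delta e $ j $ i) (fps_const (if i = j then 1 else 0) - E j i)"
      by (intro exp0_diff exp0_const eD)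
    then show ?thesis using False unfolding Amat_def by (simp split: if_splits)
  qed
  obtain DF where eDF: "exp0 D DF" unfolding D_def using exp0_det[of "\<lambda>e. Amat (Delta e) k", OF eA] by blast
  have eN1: "exp0 (\<lambda>e. (\<chi> i j. if j = k then b $ i else Amat (Delta e) k $ i $ j) $ i $ j)
     (if j = k then fps_const (b $ i) else (if i = k then 1 else (if i = j then 1 else 0) - E j i))" for i j
    using eA[of i j] exp0_const[of "b $ i"] by simp
  obtain NF where eNF: "exp0 N NF" unfolding N_def
    using exp0_det[of "\<lambda>e. (\<chi> i j. if j = k then b $ i else Amat (Delta e) k $ i $ j)", OF eN1] by blast
  have pk: "pi e $ k = N e / D e" if "e > 0" for e
    unfolding N_def D_def b_def by (rule stationary_cramer[OF stoch[OF that] irr[OF that] stat[OF that]])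
  have D0: "D e \<noteq> 0" if "e > 0" for e
    unfolding D_def by (rule Amat_det[OF stoch[OF that] irr[OF that] stat[OF that]])
  have DF0: "DF \<noteq> 0" by (rule exp0_ev_nonzero[OF eDF D0])
  have bd: "eventually (\<lambda>e. \<bar>N e\<bar> \<le> 1 * \<bar>D e\<bar>) (at_right 0)"
    using eventually_at_right_less[of 0]
  proof eventually_elim
    case (elim e)
    have s: "stationary_dist (Delta e) (pi e)" by (rule stat[OF elim])
    have nn: "\<And>i. pi e $ i \<ge> 0" and s1: "(\<Sum>i\<in>UNIV. pi e $ i) = 1" using s unfolding stationary_dist_def by auto
    have "pi e $ k \<le> (\<Sum>i\<in>UNIV. pi e $ i)" by (rule member_le_sum) (use nn in auto)
    then have le1: "\<bar>pi e $ k\<bar> \<le> 1" using nn[of k] s1 by simp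
    have "N e = pi e $ k * D e" using pk[OF elim] D0[OF elim] by simp
    then have "\<bar>N e\<bar> = \<bar>pi e $ k\<bar> * \<bar>D e\<bar>" by (simp add: abs_mult)
    also have "\<dots> \<le> 1 * \<bar>D e\<bar>" by (rule mult_right_mono[OF le1]) simp
    finally show ?case .
  qed
  obtain B where eB: "exp0 (\<lambda>e. N e / D e) B" using exp0_quot[OF eNF eDF DF0 bd] by blast
  have "eventually (\<lambda>e. N e / D e = pi e $ k) (at_right 0)"
    using eventually_at_right_less[of 0] by eventually_elim (simp add: pk)
  then have "exp0 (\<lambda>e. pi e $ k) B" by (rule exp0_cong[OF eB])
  then show ?thesis by blast
qed

lemma list_split:
  assumes "length zs = m + 1" "n \<le> m"
  shows "take m zs = take (m - n) zs @ take n (drop (m - n) zs)"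
    and "zs = take (m - n) zs @ take n (drop (m - n) zs) @ [zs ! m]"
proof -
  have m: "m = (m - n) + n" using assms by simp
  show t: "take m zs = take (m - n) zs @ take n (drop (m - n) zs)"
    by (subst m, rule take_add)
  have "take (Suc m) zs = zs" by (rule take_all) (use assms(1) in simp)
  then have "zs = take (Suc m) zs" by simp
  also have "\<dots> = take m zs @ [zs ! m]" by (rule take_Suc_conv_app_nth) (use assms in simp)
  finally show "zs = take (m - n) zs @ take n (drop (m - n) zs) @ [zs ! m]" using t by simp
qed

lemma reduce:
  fixes Delta :: "real \<Rightarrow> real^'b::finite^'b" and Phi :: "'b \<Rightarrow> 'a"
  assumes Pr: "\<And>e l. e > 0 \<Longrightarrow> Pr e l = (\<Sum>j\<in>UNIV. fwd (Delta e) Phi (s e) l j)"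
    and len: "length zs = m + 1" "n \<le> m"
  defines "x \<equiv> \<lambda>e. fwd (Delta e) Phi (s e) (take (m - n) zs)"
  defines "as \<equiv> take n (drop (m - n) zs)"
  shows "ord0 (\<lambda>e. Pr e (take m zs) / Pr e (take (m - n) zs))
       = ord0 (\<lambda>e. (\<Sum>j\<in>UNIV. fwd (Delta e) Phi (x e) as j) / (\<Sum>j\<in>UNIV. fwd (Delta e) Phi (x e) [] j))"
    and "taylor_coeffs (\<lambda>e. Pr e zs / Pr e (take m zs))
       = taylor_coeffs (\<lambda>e. (\<Sum>j\<in>UNIV. fwd (Delta e) Phi (x e) (as @ [zs ! m]) j) / (\<Sum>j\<in>UNIV. fwd (Delta e) Phi (x e) as j))"
proof -
  note sp = list_split[OF len]
  show "ord0 (\<lambda>e. Pr e (take m zs) / Pr e (take (m - n) zs))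
       = ord0 (\<lambda>e. (\<Sum>j\<in>UNIV. fwd (Delta e) Phi (x e) as j) / (\<Sum>j\<in>UNIV. fwd (Delta e) Phi (x e) [] j))"
  proof (rule ord0_cong)
    fix e :: real assume e: "e > 0"
    show "Pr e (take m zs) / Pr e (take (m - n) zs)
       = (\<Sum>j\<in>UNIV. fwd (Delta e) Phi (x e) as j) / (\<Sum>j\<in>UNIV. fwd (Delta e) Phi (x e) [] j)"
      unfolding Pr[OF e] x_def as_def by (subst sp(1)) (simp add: fwd_append)
  qed
  show "taylor_coeffs (\<lambda>e. Pr e zs / Pr e (take m zs))
       = taylor_coeffs (\<lambda>e. (\<Sum>j\<in>UNIV. fwd (Delta e) Phi (x e) (as @ [zs ! m]) j) / (\<Sum>j\<in>UNIV. fwd (Delta e) Phi (x e) as j))"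
  proof (rule taylor_coeffs_cong)
    fix e :: real assume e: "e > 0"
    have "Pr e zs = (\<Sum>j\<in>UNIV. fwd (Delta e) Phi (x e) (as @ [zs ! m]) j)"
      unfolding Pr[OF e] x_def as_def by (subst sp(2)) (simp add: fwd_append)
    moreover have "Pr e (take m zs) = (\<Sum>j\<in>UNIV. fwd (Delta e) Phi (x e) as j)"
      unfolding Pr[OF e] x_def as_def by (subst sp(1)) (simp add: fwd_append)
    ultimately show "Pr e zs / Pr e (take m zs)
       = (\<Sum>j\<in>UNIV. fwd (Delta e) Phi (x e) (as @ [zs ! m]) j) / (\<Sum>j\<in>UNIV. fwd (Delta e) Phi (x e) as j)"
      by simp
  qed
qed

theorem corollary2p7:
  fixes Phi :: "'b::finite \<Rightarrow> 'a::finite"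
    and Delta :: "real \<Rightarrow> real^'b^'b"
    and pi :: "real \<Rightarrow> real^'b"
    and zs zhs :: "'a list" and m mh n k :: nat and y yh :: 'b
  assumes stoch: "\<forall>e\<ge>0. stochastic_matrix (Delta e)"
    and normal: "normally_parameterized Phi Delta"
    and stat: "\<forall>e>0. stationary_dist (Delta e) (pi e)"
    and lz: "length zs = m + 1" and lzh: "length zhs = mh + 1"
    and nm: "n \<le> m" and nmh: "n \<le> mh"
    and agree: "drop (m - n) zs = drop (mh - n) zhs"
    and o1: "ord0 (\<lambda>e. prob_Z Phi (pi e) (Delta e) (take m zs)
                     / prob_Z Phi (pi e) (Delta e) (take (m - n) zs)) \<le> enat k"
    and o2: "ord0 (\<lambda>e. prob_Z Phi (pi e) (Delta e) (take mh zhs)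
                     / prob_Z Phi (pi e) (Delta e) (take (mh - n) zhs)) \<le> enat k"
    and o3: "ord0 (\<lambda>e. prob_YZ Phi (pi e) (Delta e) y (take m zs)
                     / prob_YZ Phi (pi e) (Delta e) y (take (m - n) zs)) \<le> enat k"
    and o4: "ord0 (\<lambda>e. prob_YZ Phi (pi e) (Delta e) yh (take mh zhs)
                     / prob_YZ Phi (pi e) (Delta e) yh (take (mh - n) zhs)) \<le> enat k"
    and j: "j + 4 * k + 1 \<le> n"
  shows
   "taylor_coeffs (\<lambda>e. prob_YZ Phi (pi e) (Delta e) y zs
                       / prob_YZ Phi (pi e) (Delta e) y (take m zs)) j
      = taylor_coeffs (\<lambda>e. prob_YZ Phi (pi e) (Delta e) yh zhs
                       / prob_YZ Phi (pi e) (Delta e) yh (take mh zhs)) j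
    \<and> taylor_coeffs (\<lambda>e. prob_YZ Phi (pi e) (Delta e) yh zhs
                       / prob_YZ Phi (pi e) (Delta e) yh (take mh zhs)) j
      = taylor_coeffs (\<lambda>e. prob_Z Phi (pi e) (Delta e) zs
                       / prob_Z Phi (pi e) (Delta e) (take m zs)) j
    \<and> taylor_coeffs (\<lambda>e. prob_Z Phi (pi e) (Delta e) zs
                       / prob_Z Phi (pi e) (Delta e) (take m zs)) j
      = taylor_coeffs (\<lambda>e. prob_Z Phi (pi e) (Delta e) zhs
                       / prob_Z Phi (pi e) (Delta e) (take mh zhs)) j"
proof -
  have st0: "\<And>e. e > 0 \<Longrightarrow> stochastic_matrix (Delta e)" using stoch by simp
  have irr: "\<And>e. e > 0 \<Longrightarrow> irreducible_matrix (Delta e)" using normal unfolding normally_parameterized_def by blast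
  have stat': "\<And>e. e > 0 \<Longrightarrow> stationary_dist (Delta e) (pi e)" using stat by blast
  have "\<forall>i j. \<exists>F. exp0 (\<lambda>e. Delta e $ i $ j) F \<and> fps_nth F 0 = Delta 0 $ i $ j"
    using normal analytic_exp0 unfolding normally_parameterized_def by blast
  then obtain E where E: "\<And>i j. exp0 (\<lambda>e. Delta e $ i $ j) (E i j)" "\<And>i j. fps_nth (E i j) 0 = Delta 0 $ i $ j"
    by metis
  have minors: "fps_nth (E i j * E i' l - E i l * E i' j) 0 = 0" if "Phi j = a" "Phi l = a" for a i i' j l
  proof -
    define S where "S = Delta_sub Phi (Delta 0) a"
    have Sij: "S $ r $ c = Delta 0 $ r $ c" if "Phi c = a" for r c
      unfolding S_def Delta_sub_def using that by simp
    have "rank S \<le> 1"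
    proof (cases "S = 0")
      case True
      then have "rank S = 0" by (simp add: rank_0)
      then show ?thesis by simp
    next
      case False
      then show ?thesis using normal unfolding normally_parameterized_def S_def by auto
    qed
    then have "S $ i $ j * S $ i' $ l = S $ i $ l * S $ i' $ j" by (rule rank_le1_minor)
    then show ?thesis using Sij that E(2) by (simp add: fps_mult_nth_0)
  qed
  have "\<forall>k. \<exists>P. exp0 (\<lambda>e. pi e $ k) P"
    using pi_exp0[OF st0 E(1) irr stat'] by blast
  then obtain P where P: "\<And>k. exp0 (\<lambda>e. pi e $ k) (P k)" by metis
  have nnD: "\<And>e. e > 0 \<Longrightarrow> nonneg_matrix (Delta e)" using st0 unfolding stochastic_matrix_def by blast
  have pinn: "\<And>e i. e > 0 \<Longrightarrow> pi e $ i \<ge> 0" using stat' unfolding stationary_dist_def by blast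
  define sY where "sY = (\<lambda>w e. (\<lambda>i. if i = w then pi e $ w else 0) :: 'b \<Rightarrow> real)"
  define sZ where "sZ = (\<lambda>e. (\<lambda>i. pi e $ i) :: 'b \<Rightarrow> real)"
  have esY: "exp0 (\<lambda>e. sY w e i) (if i = w then P w else 0)" for w i
    unfolding sY_def using P[of w] exp0_const[of 0] by (cases "i = w") simp_all
  have esZ: "exp0 (\<lambda>e. sZ e i) (P i)" for i unfolding sZ_def by (rule P)
  have nsY: "e > 0 \<Longrightarrow> sY w e i \<ge> 0" for w e i unfolding sY_def using pinn by simp
  have nsZ: "e > 0 \<Longrightarrow> sZ e i \<ge> 0" for e i unfolding sZ_def using pinn by simp
  have PrY: "\<And>w e l. e > 0 \<Longrightarrow> prob_YZ Phi (pi e) (Delta e) w l = (\<Sum>j\<in>UNIV. fwd (Delta e) Phi (sY w e) l j)"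
    unfolding sY_def by (rule prob_YZ_fwd)
  have PrZ: "\<And>e l. e > 0 \<Longrightarrow> prob_Z Phi (pi e) (Delta e) l = (\<Sum>j\<in>UNIV. fwd (Delta e) Phi (sZ e) l j)"
    unfolding sZ_def by (rule prob_Z_fwd[OF stat'])
  define as where "as = take n (drop (m - n) zs)"
  have as2: "as = take n (drop (mh - n) zhs)" unfolding as_def using agree by simp
  have a0: "zs ! m = zhs ! mh"
  proof -
    have "zs ! m = drop (m - n) zs ! n" using nm lz by simp
    also have "\<dots> = drop (mh - n) zhs ! n" using agree by simp
    also have "\<dots> = zhs ! mh" using nmh lzh by simp
    finally show ?thesis .
  qed
  have las: "length as = n" unfolding as_def using lz nm by simp
  have jlt: "j + 2 * k < length as" using j las by simp
  define x1 where "x1 = (\<lambda>e. fwd (Delta e) Phi (sY y e) (take (m - n) zs))"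
  define x2 where "x2 = (\<lambda>e. fwd (Delta e) Phi (sY yh e) (take (mh - n) zhs))"
  define x3 where "x3 = (\<lambda>e. fwd (Delta e) Phi (sZ e) (take (m - n) zs))"
  define x4 where "x4 = (\<lambda>e. fwd (Delta e) Phi (sZ e) (take (mh - n) zhs))"
  have ex1: "exp0 (\<lambda>e. x1 e i) (fwdF E Phi (\<lambda>i. if i = y then P y else 0) (take (m - n) zs) i)" for i
    unfolding x1_def by (rule exp0_fwd[OF E(1) esY])
  have ex2: "exp0 (\<lambda>e. x2 e i) (fwdF E Phi (\<lambda>i. if i = yh then P yh else 0) (take (mh - n) zhs) i)" for i
    unfolding x2_def by (rule exp0_fwd[OF E(1) esY])
  have ex3: "exp0 (\<lambda>e. x3 e i) (fwdF E Phi P (take (m - n) zs) i)" for i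
    unfolding x3_def by (rule exp0_fwd[OF E(1) esZ])
  have ex4: "exp0 (\<lambda>e. x4 e i) (fwdF E Phi P (take (mh - n) zhs) i)" for i
    unfolding x4_def by (rule exp0_fwd[OF E(1) esZ])
  have nx1: "e > 0 \<Longrightarrow> x1 e i \<ge> 0" for e i unfolding x1_def by (rule fwd_nonneg[OF nnD nsY])
  have nx2: "e > 0 \<Longrightarrow> x2 e i \<ge> 0" for e i unfolding x2_def by (rule fwd_nonneg[OF nnD nsY])
  have nx3: "e > 0 \<Longrightarrow> x3 e i \<ge> 0" for e i unfolding x3_def by (rule fwd_nonneg[OF nnD nsZ])
  have nx4: "e > 0 \<Longrightarrow> x4 e i \<ge> 0" for e i unfolding x4_def by (rule fwd_nonneg[OF nnD nsZ])
  note r1 = reduce[where Pr="\<lambda>e l. prob_YZ Phi (pi e) (Delta e) y l" and Delta=Delta and Phi=Phi and s="sY y", OF PrY lz nm, folded x1_def as_def]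
  note r2 = reduce[where Pr="\<lambda>e l. prob_YZ Phi (pi e) (Delta e) yh l" and Delta=Delta and Phi=Phi and s="sY yh", OF PrY lzh nmh, folded x2_def as2, folded a0]
  note r3 = reduce[where Pr="\<lambda>e l. prob_Z Phi (pi e) (Delta e) l" and Delta=Delta and Phi=Phi and s=sZ, OF PrZ lz nm, folded x3_def as_def]
  note r4 = reduce[where Pr="\<lambda>e l. prob_Z Phi (pi e) (Delta e) l" and Delta=Delta and Phi=Phi and s=sZ, OF PrZ lzh nmh, folded x4_def as2, folded a0]
  have o1': "ord0 (\<lambda>e. (\<Sum>j\<in>UNIV. fwd (Delta e) Phi (x3 e) as j) / (\<Sum>j\<in>UNIV. fwd (Delta e) Phi (x3 e) [] j)) \<le> enat k"
    using o1 r3(1) unfolding x3_def by simp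
  have o2': "ord0 (\<lambda>e. (\<Sum>j\<in>UNIV. fwd (Delta e) Phi (x4 e) as j) / (\<Sum>j\<in>UNIV. fwd (Delta e) Phi (x4 e) [] j)) \<le> enat k"
    using o2 r4(1) unfolding x4_def by simp
  have o3': "ord0 (\<lambda>e. (\<Sum>j\<in>UNIV. fwd (Delta e) Phi (x1 e) as j) / (\<Sum>j\<in>UNIV. fwd (Delta e) Phi (x1 e) [] j)) \<le> enat k"
    using o3 r1(1) unfolding x1_def by simp
  have o4': "ord0 (\<lambda>e. (\<Sum>j\<in>UNIV. fwd (Delta e) Phi (x2 e) as j) / (\<Sum>j\<in>UNIV. fwd (Delta e) Phi (x2 e) [] j)) \<le> enat k"
    using o4 r2(1) unfolding x2_def by simp
  have c12: "taylor_coeffs (\<lambda>e. (\<Sum>j\<in>UNIV. fwd (Delta e) Phi (x1 e) (as @ [zs ! m]) j) / (\<Sum>j\<in>UNIV. fwd (Delta e) Phi (x1 e) as j)) j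
    = taylor_coeffs (\<lambda>e. (\<Sum>j\<in>UNIV. fwd (Delta e) Phi (x2 e) (as @ [zs ! m]) j) / (\<Sum>j\<in>UNIV. fwd (Delta e) Phi (x2 e) as j)) j"
    by (rule main_fun[OF E(1) minors st0 ex1 nx1 ex2 nx2 o3' o4' jlt])
  have c23: "taylor_coeffs (\<lambda>e. (\<Sum>j\<in>UNIV. fwd (Delta e) Phi (x2 e) (as @ [zs ! m]) j) / (\<Sum>j\<in>UNIV. fwd (Delta e) Phi (x2 e) as j)) j
    = taylor_coeffs (\<lambda>e. (\<Sum>j\<in>UNIV. fwd (Delta e) Phi (x3 e) (as @ [zs ! m]) j) / (\<Sum>j\<in>UNIV. fwd (Delta e) Phi (x3 e) as j)) j"
    by (rule main_fun[OF E(1) minors st0 ex2 nx2 ex3 nx3 o4' o1' jlt])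
  have c34: "taylor_coeffs (\<lambda>e. (\<Sum>j\<in>UNIV. fwd (Delta e) Phi (x3 e) (as @ [zs ! m]) j) / (\<Sum>j\<in>UNIV. fwd (Delta e) Phi (x3 e) as j)) j
    = taylor_coeffs (\<lambda>e. (\<Sum>j\<in>UNIV. fwd (Delta e) Phi (x4 e) (as @ [zs ! m]) j) / (\<Sum>j\<in>UNIV. fwd (Delta e) Phi (x4 e) as j)) j"
    by (rule main_fun[OF E(1) minors st0 ex3 nx3 ex4 nx4 o1' o2' jlt])
  show ?thesis using c12 c23 c34 r1(2) r2(2) r3(2) r4(2) unfolding x1_def x2_def x3_def x4_def by simp
qed

end
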